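(* Let $q$ be a prime power, $m\ge 1$, $1\le k\le n$, let $g_1,\dots,g_n\in\mathbb{F}_{q^m}$ be linearly independent over $\mathbb{F}_q$, let $\mathbf g=(g_1,\dots,g_n)$, let $C$ be the Gabidulin code defined below, and let $\mathbf r\in\mathbb{F}_{q^m}^n$ be a received word. Then Algorithm 1 (described in the context), run on $k,n,\mathbf g,\mathbf r$, returns a list whose elements are exactly the message polynomials $m(x)$ ($m\in\mathcal{L}_q(x,q^m)$, $\mathrm{qdeg}(m)<k$) of all codewords $\mathbf c=(m(g_1),\dots,m(g_n))\in C$ that are closest to $\mathbf r$ in the rank distance, i.e. with $d_R(\mathbf c,\mathbf r)=\min_{\mathbf c'\in C}d_R(\mathbf c',\mathbf r)$.
   Context: Write $[i]:=q^i$. A $q$-linearized polynomial over $\mathbb{F}_{q^m}$ is $f(x)=\sum_{i=0}^{d}a_ix^{[i]}$ with $a_i\in\mathbb{F}_{q^m}$; if $a_d\ne0$ then $d=\mathrm{qdeg}(f)$ is its $q$-degree ($\mathrm{qdeg}(0)=-\infty$), and $f$ is monic if $a_d=1$. The set $\mathcal{L}_q(x,q^m)$ of such polynomials is a (noncommutative) ring under addition and composition $f\circ g=f(g(x))$. For $\mathbb{F}_q$-linearly independent $g_1,\dots,g_n$, $\Pi_{\mathbf g}(x)=\prod_{u\in\langle g_1,\dots,g_n\rangle}(x-u)$ ($\mathbb{F}_q$-linear span) is the $q$-annihilator polynomial; it lies in $\mathcal{L}_q(x,q^m)$ and has $q$-degree $n$. For $\mathbf r=(r_1,\dots,r_n)$,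 the $q$-Lagrange polynomial is $\Lambda_{\mathbf g,\mathbf r}(x)=\sum_{i=1}^n(-1)^{n-i}r_i\det(\mathfrak D_i(\mathbf g,x))/\det(M_n(g_1,\dots,g_n))$, where $M_n(v_1,\dots,v_s)$ is the $n\times s$ matrix with $(j,l)$ entry $v_l^{[j-1]}$ and $\mathfrak D_i(\mathbf g,x)$ is $M_n(g_1,\dots,g_n,x)$ with the $i$-th column removed; it lies in $\mathcal{L}_q(x,q^m)$, has $q$-degree less than $n$ and satisfies $\Lambda_{\mathbf g,\mathbf r}(g_i)=r_i$. The Gabidulin code is $C=\{(m(g_1),\dots,m(g_n)) : m\in\mathcal{L}_q(x,q^m),\ \mathrm{qdeg}(m)<k\}$, $m$ being the message polynomial of the codeword. The rank distance $d_R(\mathbf a,\mathbf b)$ of $\mathbf a,\mathbf b\in\mathbb{F}_{q^m}^n$ is the $\mathbb{F}_q$-rank of the $m\times n$ matrix over $\mathbb{F}_q$ obtained by expanding each coordinate of $\mathbf a-\mathbf b$ in a fixed $\mathbb{F}_q$-basis of $\mathbb{F}_{q^m}$. $\mathcal{L}_q(x,q^m)^2$ is a left module via $h\circ[f_1\ f_2]=[h\circ f_1\ \ h\circ f_2]$. The interpolation module $\mathfrak M(\mathbf r)$ is the set of all $\beta\circ[\Pi_{\mathbf g}(x)\ \ 0]+\gamma\circ[-\Lambda_{\mathbf g,\mathbf r}(x)\ \ x]$ with $\beta,\gamma\in\mathcal{L}_q(x,q^m)$. Monomials are $x^{[i]}e_j$ ($x^{[i]}$ in coordinate $j\in\{1,2\}$).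 The $(0,k-1)$-weighted term-over-position order: with $w_1=0,w_2=k-1$, $x^{[i_1]}e_{j_1}<x^{[i_2]}e_{j_2}$ iff $i_1+w_{j_1}<i_2+w_{j_2}$, or $i_1+w_{j_1}=i_2+w_{j_2}$ and $j_1<j_2$. The leading monomial $\mathrm{lm}(f)$ of a nonzero $f$ is its largest monomial (with nonzero coefficient), the leading term $\mathrm{lt}(f)$ is that monomial with its coefficient, and the leading position $\mathrm{lpos}(f)$ is its coordinate $j$. The weighted $q$-degree of $[f_1\ f_2]$ is $\max\{\mathrm{qdeg}(f_1),\mathrm{qdeg}(f_2)+k-1\}$. A basis of a submodule is a generating set whose elements are linearly independent ($\sum a_i\circ f^{(i)}=0$ with $a_i\in\mathcal{L}_q(x,q^m)$ implies all $a_i=0$). For nonzero $f^{(1)},\dots,f^{(s)}$, $f$ reduces modulo $F=\{f^{(1)},\dots,f^{(s)}\}$ in one step if $h=f-\sum_{i}(b_ix^{[a_i]})\circ f^{(i)}$ (sum over some of the $f^{(i)}$) with $\mathrm{lm}(f)=x^{[a_i]}\circ\mathrm{lm}(f^{(i)})$ for each such $i$ and $\mathrm{lt}(f)=\sum_i(b_ix^{[a_i]})\circ\mathrm{lt}(f^{(i)})$; $f$ is minimal w.r.t. $F$ if it cannot be so reduced. A basis $B$ is minimal if each $b\in B$ is minimal w.r.t. $B\setminus\{b\}$. Algorithm 1 (input $k,n,\mathbf g,\mathbf r$): (1) compute $\Pi_{\mathbf g},\Lambda_{\mathbf g,\mathbf r}$ and form $\mathfrak M(\mathbf r)$; (2)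 compute a minimal basis $\{b^{(1)},b^{(2)}\}$ of $\mathfrak M(\mathbf r)$ w.r.t. the $(0,k-1)$-weighted term-over-position order with $\mathrm{lpos}(b^{(1)})=1$, $\mathrm{lpos}(b^{(2)})=2$; (3) let $\ell_1,\ell_2$ be the weighted $q$-degrees of $b^{(1)},b^{(2)}$; (4) set list $:=$ empty, $j:=0$; while list is empty: for every $\beta\in\mathcal{L}_q(x,q^m)$ with $\mathrm{qdeg}(\beta)\le\ell_2-\ell_1+j$ and every monic $\gamma\in\mathcal{L}_q(x,q^m)$ with $\mathrm{qdeg}(\gamma)=j$, put $f=[f_1\ f_2]:=\beta\circ b^{(1)}+\gamma\circ b^{(2)}$, and if there is $m\in\mathcal{L}_q(x,q^m)$ with $f_1(x)=-f_2(m(x))$, add $m$ to the list; then $j:=j+1$. Return the list. *)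

theory Defs
  imports "HOL-Computational_Algebra.Polynomial" "HOL-Computational_Algebra.Primes"
    "Jordan_Normal_Form.Determinant" "HOL-Library.Cardinality"
begin

definition Fq :: "nat \<Rightarrow> 'a::field set" where
  "Fq q = {x. x ^ q = x}"

definition Fq_lin_indep :: "nat \<Rightarrow> (nat \<Rightarrow> 'a::field) \<Rightarrow> nat set \<Rightarrow> bool" where
  "Fq_lin_indep q v I =
     (\<forall>c. (\<forall>i\<in>I. c i \<in> Fq q) \<and> (\<Sum>i\<in>I. c i * v i) = 0 \<longrightarrow> (\<forall>i\<in>I. c i = 0))"

definition Fq_span :: "nat \<Rightarrow> (nat \<Rightarrow> 'a::field) \<Rightarrow> nat \<Rightarrow> 'a set" where
  "Fq_span q g n = {\<Sum>i<n. c i * g i | c. \<forall>i<n. c i \<in> Fq q}"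

text \<open>q-linearized polynomials: ordinary polynomials whose monomials are all x^(q^i).
  The ring operation is composition (pcompose).\<close>
definition linpolys :: "nat \<Rightarrow> 'a::comm_ring_1 poly set" where
  "linpolys q = {p. \<forall>i. coeff p i \<noteq> 0 \<longrightarrow> (\<exists>j. i = q ^ j)}"

text \<open>q-degree of a nonzero linearized polynomial (the zero case, -infinity, is treated separately).\<close>
definition qdeg :: "nat \<Rightarrow> 'a::zero poly \<Rightarrow> nat" where
  "qdeg q p = (THE d. degree p = q ^ d)"

definition lcomp :: "'a::comm_ring_1 poly \<Rightarrow> 'a poly \<times> 'a poly \<Rightarrow> 'a poly \<times> 'a poly" where
  "lcomp \<beta> f = (pcompose \<beta> (fst f), pcompose \<beta> (snd f))"

definition padd :: "'a::comm_ring_1 poly \<times> 'a poly \<Rightarrow> 'a poly \<times> 'a poly \<Rightarrow> 'a poly \<times> 'a poly" where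
  "padd f h = (fst f + fst h, snd f + snd h)"

definition ann_poly :: "nat \<Rightarrow> (nat \<Rightarrow> 'a::field) \<Rightarrow> nat \<Rightarrow> 'a poly" where
  "ann_poly q g n = (\<Prod>u\<in>Fq_span q g n. [:-u, 1:])"

text \<open>M_n(v_1,...,v_s): n x s matrix with (j,l) entry v_l^[j-1] (0-based here).\<close>
definition Mmat :: "nat \<Rightarrow> nat \<Rightarrow> 'b::comm_ring_1 list \<Rightarrow> 'b mat" where
  "Mmat q n vs = mat n (length vs) (\<lambda>(j, l). (vs ! l) ^ (q ^ j))"

definition lagrange_poly :: "nat \<Rightarrow> nat \<Rightarrow> (nat \<Rightarrow> 'a::field) \<Rightarrow> (nat \<Rightarrow> 'a) \<Rightarrow> 'a poly" where
  "lagrange_poly q n g r =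
     (\<Sum>i<n. smult ((-1) ^ (n - 1 - i) * r i / det (Mmat q n (map g [0..<n])))
        (det (Mmat q n (let vs = map (\<lambda>l. [:g l:]) [0..<n] @ [[:0, 1:]]
                        in take i vs @ drop (Suc i) vs))))"

definition interp_module :: "nat \<Rightarrow> nat \<Rightarrow> (nat \<Rightarrow> 'a::field) \<Rightarrow> (nat \<Rightarrow> 'a) \<Rightarrow> ('a poly \<times> 'a poly) set" where
  "interp_module q n g r =
     {padd (lcomp \<beta> (ann_poly q g n, 0)) (lcomp \<gamma> (- lagrange_poly q n g r, [:0, 1:])) | \<beta> \<gamma>.
        \<beta> \<in> linpolys q \<and> \<gamma> \<in> linpolys q}"

text \<open>Monomials x^[i] e_j are pairs (i, j), j \<in> {1,2}; (0,k-1)-weighted TOP order.\<close>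
definition mweight :: "nat \<Rightarrow> nat \<Rightarrow> nat" where
  "mweight k j = (if j = 1 then 0 else k - 1)"

definition mon_less :: "nat \<Rightarrow> nat \<times> nat \<Rightarrow> nat \<times> nat \<Rightarrow> bool" where
  "mon_less k \<mu> \<nu> =
     (fst \<mu> + mweight k (snd \<mu>) < fst \<nu> + mweight k (snd \<nu>) \<or>
      (fst \<mu> + mweight k (snd \<mu>) = fst \<nu> + mweight k (snd \<nu>) \<and> snd \<mu> < snd \<nu>))"

definition comp :: "nat \<Rightarrow> 'b \<times> 'b \<Rightarrow> 'b" where
  "comp j f = (if j = 1 then fst f else snd f)"

definition mons :: "nat \<Rightarrow> 'a::zero poly \<times> 'a poly \<Rightarrow> (nat \<times> nat) set" where
  "mons q f = {(i, j). j \<in> {1, 2} \<and> coeff (comp j f) (q ^ i) \<noteq> 0}"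

definition lm :: "nat \<Rightarrow> nat \<Rightarrow> 'a::zero poly \<times> 'a poly \<Rightarrow> nat \<times> nat" where
  "lm q k f = (THE \<mu>. \<mu> \<in> mons q f \<and> (\<forall>\<nu>\<in>mons q f. \<nu> \<noteq> \<mu> \<longrightarrow> mon_less k \<nu> \<mu>))"

definition lpos :: "nat \<Rightarrow> nat \<Rightarrow> 'a::zero poly \<times> 'a poly \<Rightarrow> nat" where
  "lpos q k f = snd (lm q k f)"

definition lc :: "nat \<Rightarrow> nat \<Rightarrow> 'a::zero poly \<times> 'a poly \<Rightarrow> 'a" where
  "lc q k f = coeff (comp (snd (lm q k f)) f) (q ^ fst (lm q k f))"

text \<open>One-step reducibility: (b x^[a]) o (c x^[i] e_j) = b c^(q^a) x^[a+i] e_j.\<close>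
definition reduces_step :: "nat \<Rightarrow> nat \<Rightarrow> ('a::field poly \<times> 'a poly) set \<Rightarrow> 'a poly \<times> 'a poly \<Rightarrow> bool" where
  "reduces_step q k F f =
     (f \<noteq> (0, 0) \<and>
      (\<exists>S a b. finite S \<and> S \<subseteq> F \<and>
         (\<forall>h\<in>S. h \<noteq> (0, 0) \<and> lm q k f = (a h + fst (lm q k h), snd (lm q k h))) \<and>
         lc q k f = (\<Sum>h\<in>S. b h * lc q k h ^ (q ^ a h))))"

definition lcomb :: "('a::comm_ring_1 poly \<times> 'a poly) set \<Rightarrow> ('a poly \<times> 'a poly \<Rightarrow> 'a poly) \<Rightarrow> 'a poly \<times> 'a poly" where
  "lcomb B a = ((\<Sum>h\<in>B. fst (lcomp (a h) h)), (\<Sum>h\<in>B. snd (lcomp (a h) h)))"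

definition is_basis :: "nat \<Rightarrow> ('a::comm_ring_1 poly \<times> 'a poly) set \<Rightarrow> ('a poly \<times> 'a poly) set \<Rightarrow> bool" where
  "is_basis q M B =
     (finite B \<and> B \<subseteq> M \<and>
      M = {lcomb B a | a. \<forall>h\<in>B. a h \<in> linpolys q} \<and>
      (\<forall>a. (\<forall>h\<in>B. a h \<in> linpolys q) \<and> lcomb B a = (0, 0) \<longrightarrow> (\<forall>h\<in>B. a h = 0)))"

definition minimal_basis :: "nat \<Rightarrow> nat \<Rightarrow> ('a::field poly \<times> 'a poly) set \<Rightarrow> ('a poly \<times> 'a poly) set \<Rightarrow> bool" where
  "minimal_basis q k M B = (is_basis q M B \<and> (\<forall>b\<in>B. \<not> reduces_step q k (B - {b}) b))"

text \<open>weighted q-degree max(qdeg f1, qdeg f2 + k - 1), with qdeg 0 = -infinity.\<close>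
definition wqdeg :: "nat \<Rightarrow> nat \<Rightarrow> 'a::zero poly \<times> 'a poly \<Rightarrow> int" where
  "wqdeg q k f =
     (if fst f = 0 then int (qdeg q (snd f)) + int k - 1
      else if snd f = 0 then int (qdeg q (fst f))
      else max (int (qdeg q (fst f))) (int (qdeg q (snd f)) + int k - 1))"

text \<open>Messages added to the list in iteration j of step (4) of Algorithm 1.\<close>
definition alg_candidates :: "nat \<Rightarrow> nat \<Rightarrow> 'a::field poly \<times> 'a poly \<Rightarrow> 'a poly \<times> 'a poly \<Rightarrow> nat \<Rightarrow> 'a poly set" where
  "alg_candidates q k b1 b2 j =
     {mp. mp \<in> linpolys q \<and>
        (\<exists>\<beta> \<gamma>. \<beta> \<in> linpolys q \<and> (\<beta> = 0 \<or> int (qdeg q \<beta>) \<le> wqdeg q k b2 - wqdeg q k b1 + int j) \<and>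
           \<gamma> \<in> linpolys q \<and> \<gamma> \<noteq> 0 \<and> lead_coeff \<gamma> = 1 \<and> qdeg q \<gamma> = j \<and>
           (let f = padd (lcomp \<beta> b1) (lcomp \<gamma> b2) in fst f = - pcompose (snd f) mp))}"

definition algorithm1_output :: "nat \<Rightarrow> nat \<Rightarrow> 'a::field poly \<times> 'a poly \<Rightarrow> 'a poly \<times> 'a poly \<Rightarrow> 'a poly set" where
  "algorithm1_output q k b1 b2 =
     alg_candidates q k b1 b2 (LEAST j. alg_candidates q k b1 b2 j \<noteq> {})"

text \<open>Rank distance: F_q-rank of the expanded m x n matrix = maximal number of
  F_q-linearly independent columns (coordinates of a - b).\<close>
definition rank_dist :: "nat \<Rightarrow> nat \<Rightarrow> (nat \<Rightarrow> 'a::field) \<Rightarrow> (nat \<Rightarrow> 'a) \<Rightarrow> nat" where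
  "rank_dist q n a b = Max {card I | I. I \<subseteq> {..<n} \<and> Fq_lin_indep q (\<lambda>i. a i - b i) I}"

definition gabidulin_msgs :: "nat \<Rightarrow> nat \<Rightarrow> 'a::comm_ring_1 poly set" where
  "gabidulin_msgs q k = {mp \<in> linpolys q. mp = 0 \<or> qdeg q mp < k}"

definition codeword :: "(nat \<Rightarrow> 'a::comm_ring_1) \<Rightarrow> 'a poly \<Rightarrow> nat \<Rightarrow> 'a" where
  "codeword g mp = (\<lambda>i. poly mp (g i))"

end

theory Submission
  imports Defs
begin

lemma of_nat_card_eq_0: "of_nat CARD('a::{ring_1,finite}) = (0::'a)"
proof -
  have "(\<Sum>x\<in>(UNIV::'a set). x + 1) = (\<Sum>x\<in>UNIV. x)"
    by (rule sum.reindex_bij_witness[of _ "\<lambda>x. x - 1" "\<lambda>x. x + 1"]) auto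
  hence "(\<Sum>x\<in>(UNIV::'a set). x) + of_nat CARD('a) = (\<Sum>x\<in>UNIV. x)"
    by (simp add: sum.distrib)
  thus ?thesis by simp
qed

lemma power_card_field: "(x::'a::{field,finite}) ^ CARD('a) = x"
proof (cases "x = 0")
  case False
  have "x * (\<Prod>y\<in>UNIV-{0}. x * y) = x * x ^ (CARD('a) - 1) * \<Prod>(UNIV-{0::'a})"
    by (simp add: prod.distrib mult_ac)
  also have "x * x ^ (CARD('a) - 1) = x ^ Suc (CARD('a) - 1)"
    by (subst power_Suc) auto
  also have "Suc (CARD('a) - 1) = CARD('a)"
    using finite_UNIV_card_ge_0[where ?'a = 'a] by simp
  also have "(\<Prod>y\<in>UNIV-{0}. x * y) = (\<Prod>y\<in>UNIV-{0::'a}. y)"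
    by (rule prod.reindex_bij_witness[of _ "\<lambda>y. y / x" "\<lambda>y. x * y"]) (use False in auto)
  finally show ?thesis
    by simp
qed (use finite_UNIV_card_ge_0[where ?'a = 'a] in auto)

locale gab =
  fixes q :: nat and e :: nat and m :: nat and TY :: "'a::{field,finite} itself"
  assumes q_def: "q = CHAR('a) ^ e" and e_pos: "0 < e" and m_pos: "0 < m"
    and card_def: "CARD('a) = q ^ m"
begin

lemma prime_char: "prime CHAR('a)"
proof -
  have "0 < CHAR('a)" by (rule finite_imp_CHAR_pos) simp
  thus ?thesis by (rule prime_CHAR_semidom)
qed

lemma q_ge2: "q \<ge> 2"
proof -
  have "CHAR('a) \<ge> 2" using prime_char prime_ge_2_nat by blast
  hence "CHAR('a) ^ 1 \<le> CHAR('a) ^ e" using e_pos by (intro power_increasing) auto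
  thus ?thesis using \<open>CHAR('a) \<ge> 2\<close> q_def by simp
qed

lemma frob_add: "((x::'a) + y) ^ (q ^ i) = x ^ (q ^ i) + y ^ (q ^ i)"
  by (rule freshmans_dream'[OF prime_char, of _ "e * i"]) (simp add: q_def power_mult)

lemma frob_add_poly: "((x::'a poly) + y) ^ (q ^ i) = x ^ (q ^ i) + y ^ (q ^ i)"
  by (rule freshmans_dream'[of _ "e * i"]) (simp_all add: q_def power_mult prime_char)

lemma frob_sum: "(sum (f::'b \<Rightarrow> 'a) A) ^ (q ^ i) = (\<Sum>x\<in>A. f x ^ (q ^ i))"
  by (rule freshmans_dream_sum'[OF prime_char, of _ "e * i"]) (simp add: q_def power_mult)

lemma frob_sum_poly: "(sum (f::'b \<Rightarrow> 'a poly) A) ^ (q ^ i) = (\<Sum>x\<in>A. f x ^ (q ^ i))"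
  by (rule freshmans_dream_sum'[of _ "e * i"]) (simp_all add: q_def power_mult prime_char)

lemma frob_uminus: "(-(x::'a)) ^ (q ^ i) = - (x ^ (q ^ i))"
proof -
  have "(-x + x) ^ (q ^ i) = 0" using q_ge2 by simp
  thus ?thesis unfolding frob_add by (simp add: add_eq_0_iff)
qed

lemma frob_uminus_poly: "(-(x::'a poly)) ^ (q ^ i) = - (x ^ (q ^ i))"
proof -
  have "(-x + x) ^ (q ^ i) = 0" using q_ge2 by simp
  thus ?thesis unfolding frob_add_poly by (simp add: add_eq_0_iff)
qed

lemma frob_diff: "((x::'a) - y) ^ (q ^ i) = x ^ (q ^ i) - y ^ (q ^ i)"
  using frob_add[of x "-y"] frob_uminus[of y] by simp

lemma frob_diff_poly: "((x::'a poly) - y) ^ (q ^ i) = x ^ (q ^ i) - y ^ (q ^ i)"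
  using frob_add_poly[of x "-y"] frob_uminus_poly[of y] by simp

lemma power_qm: "(x::'a) ^ (q ^ m) = x"
  using power_card_field[of x] card_def by simp

end


context gab begin

lemma Fq_pow: "c \<in> Fq q \<Longrightarrow> (c::'a) ^ (q ^ i) = c"
proof (induction i)
  case (Suc i)
  have "c ^ (q ^ Suc i) = (c ^ (q ^ i)) ^ q" by (simp add: power_mult[symmetric] mult.commute)
  thus ?case using Suc by (simp add: Fq_def)
qed simp

lemma Fq_0[simp]: "(0::'a) \<in> Fq q" using q_ge2 by (simp add: Fq_def)
lemma Fq_1[simp]: "(1::'a) \<in> Fq q" by (simp add: Fq_def)
lemma Fq_add: "a \<in> Fq q \<Longrightarrow> b \<in> Fq q \<Longrightarrow> (a::'a) + b \<in> Fq q"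
  using frob_add[of a b 1] by (simp add: Fq_def)
lemma Fq_uminus: "a \<in> Fq q \<Longrightarrow> - (a::'a) \<in> Fq q"
  using frob_uminus[of a 1] by (simp add: Fq_def)
lemma Fq_diff: "a \<in> Fq q \<Longrightarrow> b \<in> Fq q \<Longrightarrow> (a::'a) - b \<in> Fq q"
  using frob_diff[of a b 1] by (simp add: Fq_def)
lemma Fq_mult: "a \<in> Fq q \<Longrightarrow> b \<in> Fq q \<Longrightarrow> (a::'a) * b \<in> Fq q"
  by (simp add: Fq_def power_mult_distrib)
lemma Fq_inverse: "a \<in> Fq q \<Longrightarrow> inverse (a::'a) \<in> Fq q"
  by (simp add: Fq_def power_inverse)
lemma Fq_divide: "a \<in> Fq q \<Longrightarrow> b \<in> Fq q \<Longrightarrow> (a::'a) / b \<in> Fq q"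
  by (simp add: divide_inverse Fq_mult Fq_inverse)

definition XX :: "'a poly" where "XX = monom 1 q - monom 1 1"

lemma degree_XX: "degree XX = q"
proof (rule antisym)
  show "degree XX \<le> q" unfolding XX_def
    using q_ge2 by (intro order.trans[OF degree_diff_le_max]) (auto simp: degree_monom_eq)
  show "q \<le> degree XX" unfolding XX_def using q_ge2 by (intro le_degree) simp
qed

lemma XX_nz: "XX \<noteq> 0" using degree_XX q_ge2 by auto

lemma poly_XX: "poly XX x = x ^ q - x" by (simp add: XX_def poly_monom)

lemma XX_dvd: "XX dvd (monom 1 (q ^ m) - monom 1 1 :: 'a poly)"
proof -
  have "(\<Sum>i<m. monom (1::'a) (q ^ Suc i) - monom 1 (q ^ i)) = monom 1 (q ^ m) - monom 1 (q ^ 0)"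
    by (rule sum_lessThan_telescope)
  moreover have "XX ^ (q ^ i) = monom (1::'a) (q ^ Suc i) - monom 1 (q ^ i)" for i
    unfolding XX_def frob_diff_poly monom_power by (simp add: mult.commute)
  ultimately have eq: "monom 1 (q ^ m) - monom 1 1 = (\<Sum>i<m. XX ^ (q ^ i))" by simp
  have "XX dvd XX ^ (q ^ i)" for i using q_ge2 by (intro dvd_power) auto
  thus ?thesis unfolding eq by (intro dvd_sum) auto
qed

lemma Fq_roots: "Fq q = {x. poly XX x = 0}"
  by (auto simp: Fq_def poly_XX)

lemma card_Fq: "card (Fq q :: 'a set) = q"
proof (rule antisym)
  show "card (Fq q :: 'a set) \<le> q" unfolding Fq_roots using card_poly_roots_bound[OF XX_nz] degree_XX by simp
next
  define P where "P = (monom 1 (q ^ m) - monom 1 1 :: 'a poly)"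
  obtain H where H: "P = XX * H" using XX_dvd unfolding P_def by (auto elim: dvdE)
  have qm: "q ^ m > 1" using q_ge2 m_pos by (intro one_less_power) auto
  have degP: "degree P = q ^ m"
  proof (rule antisym)
    show "degree P \<le> q ^ m" unfolding P_def
      using qm by (intro order.trans[OF degree_diff_le_max]) (auto simp: degree_monom_eq)
    show "q ^ m \<le> degree P" unfolding P_def using qm by (intro le_degree) simp
  qed
  hence "P \<noteq> 0" using qm by (metis degree_0 not_less0 less_trans zero_less_one)
  hence Hnz: "H \<noteq> 0" using H by auto
  have "degree P = q + degree H" using H degree_mult_eq[OF XX_nz Hnz] degree_XX by simp
  hence dH: "degree H = q ^ m - q" using degP by simp
  have "UNIV \<subseteq> {x. poly XX x = 0} \<union> {x::'a. poly H x = 0}"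
  proof
    fix x :: 'a
    have "poly P x = 0" unfolding P_def using power_qm[of x] by (simp add: poly_monom)
    thus "x \<in> {x. poly XX x = 0} \<union> {x. poly H x = 0}" using H by simp
  qed
  hence "card (UNIV :: 'a set) \<le> card {x. poly XX x = 0} + card {x::'a. poly H x = 0}"
  proof -
    have "card (UNIV :: 'a set) \<le> card ({x. poly XX x = 0} \<union> {x::'a. poly H x = 0})"
      using \<open>UNIV \<subseteq> _\<close> by (intro card_mono) auto
    also have "\<dots> \<le> card {x. poly XX x = 0} + card {x::'a. poly H x = 0}" by (rule card_Un_le)
    finally show ?thesis .
  qed
  also have "\<dots> \<le> card (Fq q :: 'a set) + (q ^ m - q)"
    using card_poly_roots_bound[OF Hnz] dH Fq_roots by simp
  finally have "q ^ m \<le> card (Fq q :: 'a set) + (q ^ m - q)" using card_def by simp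
  moreover have "q ^ 1 \<le> q ^ m" using m_pos q_ge2 by (intro power_increasing) auto
  ultimately show "q \<le> card (Fq q :: 'a set)" by simp
qed

end


lemma pcompose_X: "[:0, 1:] \<circ>\<^sub>p r = (r::'a::comm_ring_1 poly)"
  by (simp add: pcompose_pCons)

lemma pcompose_monom: "monom c n \<circ>\<^sub>p r = smult c (r ^ n :: 'a::comm_ring_1 poly)"
proof (induction n)
  case 0 thus ?case by (simp add: monom_0 pcompose_const)
next
  case (Suc n)
  show ?case using Suc by (simp add: monom_Suc pcompose_pCons)
qed

context gab begin

definition lsum :: "(nat \<Rightarrow> 'a) \<Rightarrow> nat \<Rightarrow> 'a poly" where
  "lsum a N = (\<Sum>j<N. monom (a j) (q ^ j))"

lemma q_pow_inj: "q ^ i = q ^ j \<longleftrightarrow> i = j"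
  using q_ge2 by (intro power_inject_exp) auto

lemma q_pow_gt: "j < q ^ j"
proof -
  have "j < 2 ^ j" by (rule less_exp)
  also have "2 ^ j \<le> q ^ j" using q_ge2 by (intro power_mono) auto
  finally show ?thesis .
qed

lemma q_pow_pos: "0 < q ^ j" using q_ge2 by simp

lemma lin_def: "p \<in> linpolys q \<longleftrightarrow> (\<forall>i. coeff p i \<noteq> 0 \<longrightarrow> (\<exists>j. i = q ^ j))"
  by (simp add: linpolys_def)

lemma lin_0[simp]: "0 \<in> linpolys q" by (simp add: lin_def)
lemma lin_add: "p \<in> linpolys q \<Longrightarrow> r \<in> linpolys q \<Longrightarrow> p + r \<in> linpolys q"
  unfolding lin_def by (metis add.right_neutral add_0 coeff_add)
lemma lin_uminus: "p \<in> linpolys q \<Longrightarrow> - p \<in> linpolys q"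
  unfolding lin_def by simp
lemma lin_diff: "p \<in> linpolys q \<Longrightarrow> r \<in> linpolys q \<Longrightarrow> p - r \<in> linpolys q"
  using lin_add[of p "-r"] lin_uminus[of r] by simp
lemma lin_smult: "p \<in> linpolys q \<Longrightarrow> smult c p \<in> linpolys q"
  unfolding lin_def by (metis coeff_smult mult_zero_right)
lemma lin_monom: "monom c (q ^ j) \<in> linpolys q"
  unfolding lin_def by (auto simp: coeff_monom)
lemma lin_sum: "(\<And>x. x \<in> A \<Longrightarrow> f x \<in> linpolys q) \<Longrightarrow> sum f A \<in> linpolys q"
  by (induction A rule: infinite_finite_induct) (auto intro: lin_add)
lemma lin_lsum: "lsum a N \<in> linpolys q"
  unfolding lsum_def by (intro lin_sum lin_monom)
lemma lin_X: "[:0, 1:] \<in> linpolys q"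
  unfolding lin_def by (auto simp: coeff_pCons split: nat.splits intro: exI[of _ 0])

lemma coeff_lsum_pow: "coeff (lsum a N) (q ^ j) = (if j < N then a j else 0)"
proof -
  have "coeff (lsum a N) (q ^ j) = (\<Sum>i<N. if i = j then a i else 0)"
    unfolding lsum_def coeff_sum coeff_monom by (intro sum.cong) (auto simp: q_pow_inj)
  thus ?thesis by simp
qed

lemma lin_repr: "(p::'a poly) \<in> linpolys q \<Longrightarrow> p = lsum (\<lambda>j. coeff p (q ^ j)) (Suc (degree p))"
proof (rule poly_eqI)
  fix i assume p: "p \<in> linpolys q"
  show "coeff p i = coeff (lsum (\<lambda>j. coeff p (q ^ j)) (Suc (degree p))) i"
  proof (cases "\<exists>j. i = q ^ j")
    case True
    then obtain j where i: "i = q ^ j" by blast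
    show ?thesis
    proof (cases "j < Suc (degree p)")
      case True thus ?thesis unfolding i coeff_lsum_pow by simp
    next
      case False
      hence "degree p < q ^ j" using q_pow_gt[of j] by simp
      thus ?thesis unfolding i coeff_lsum_pow using False by (simp add: coeff_eq_0)
    qed
  next
    case False
    hence "coeff p i = 0" using p unfolding lin_def by blast
    moreover have "coeff (lsum (\<lambda>j. coeff p (q ^ j)) (Suc (degree p))) i = 0"
      using False lin_lsum unfolding lin_def by blast
    ultimately show ?thesis by simp
  qed
qed

lemma lin_ex: "(p::'a poly) \<in> linpolys q \<Longrightarrow> \<exists>a N. p = lsum a N"
  using lin_repr by blast

lemma poly_lsum: "poly (lsum a N) x = (\<Sum>j<N. a j * x ^ (q ^ j))"
  by (simp add: lsum_def poly_sum poly_monom)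

lemma pcompose_lsum: "lsum a N \<circ>\<^sub>p r = (\<Sum>j<N. smult (a j) (r ^ (q ^ j)))"
  by (simp add: lsum_def pcompose_sum pcompose_monom)

lemma lin_poly_add: "(p::'a poly) \<in> linpolys q \<Longrightarrow> poly p (x + y) = poly p x + poly p y"
  by (auto dest!: lin_ex simp add: poly_lsum frob_add distrib_left sum.distrib)

lemma lin_poly_0: "(p::'a poly) \<in> linpolys q \<Longrightarrow> poly p 0 = 0"
  by (auto dest!: lin_ex simp add: poly_lsum zero_power[OF q_pow_pos])

lemma lin_poly_uminus: "(p::'a poly) \<in> linpolys q \<Longrightarrow> poly p (- x) = - poly p x"
  by (auto dest!: lin_ex simp add: poly_lsum frob_uminus sum_negf)

lemma lin_poly_diff: "(p::'a poly) \<in> linpolys q \<Longrightarrow> poly p (x - y) = poly p x - poly p y"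
  using lin_poly_add[of p x "-y"] lin_poly_uminus[of p y] by simp

lemma lin_poly_scale: "(p::'a poly) \<in> linpolys q \<Longrightarrow> c \<in> Fq q \<Longrightarrow> poly p (c * x) = c * poly p x"
  by (auto dest!: lin_ex simp add: poly_lsum power_mult_distrib Fq_pow sum_distrib_left mult_ac)

lemma lin_poly_sum: "(p::'a poly) \<in> linpolys q \<Longrightarrow> poly p (sum f A) = (\<Sum>x\<in>A. poly p (f x))"
  by (induction A rule: infinite_finite_induct) (auto simp: lin_poly_0 lin_poly_add)

lemma lin_poly_lincomb: "(p::'a poly) \<in> linpolys q \<Longrightarrow> (\<And>i. i \<in> A \<Longrightarrow> c i \<in> Fq q) \<Longrightarrow>
   poly p (\<Sum>i\<in>A. c i * v i) = (\<Sum>i\<in>A. c i * poly p (v i))"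
  by (simp add: lin_poly_sum lin_poly_scale)

lemma lin_pcomp_add: "(p::'a poly) \<in> linpolys q \<Longrightarrow> p \<circ>\<^sub>p (r + s) = p \<circ>\<^sub>p r + p \<circ>\<^sub>p s"
  by (auto dest!: lin_ex simp add: pcompose_lsum frob_add_poly sum.distrib smult_add_right)

lemma lin_pcomp_0: "(p::'a poly) \<in> linpolys q \<Longrightarrow> p \<circ>\<^sub>p 0 = 0"
  using lin_poly_0[of p] by (simp add: pcompose_0' poly_0_coeff_0)

lemma lin_pcomp_uminus: "(p::'a poly) \<in> linpolys q \<Longrightarrow> p \<circ>\<^sub>p (- r) = - (p \<circ>\<^sub>p r)"
  using lin_pcomp_add[of p r "-r"] lin_pcomp_0[of p] by (simp add: add_eq_0_iff)

lemma lin_pcomp_diff: "(p::'a poly) \<in> linpolys q \<Longrightarrow> p \<circ>\<^sub>p (r - s) = p \<circ>\<^sub>p r - p \<circ>\<^sub>p s"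
  using lin_pcomp_add[of p r "-s"] lin_pcomp_uminus[of p s] by simp

lemma lin_power: "(r::'a poly) \<in> linpolys q \<Longrightarrow> r ^ (q ^ j) \<in> linpolys q"
proof -
  assume "r \<in> linpolys q"
  then obtain b M where r: "r = lsum b M" using lin_ex by blast
  have "r ^ (q ^ j) = (\<Sum>l<M. monom (b l ^ (q ^ j)) (q ^ (l + j)))"
    unfolding r lsum_def frob_sum_poly monom_power by (simp add: power_add)
  thus ?thesis by (simp add: lin_sum lin_monom)
qed

lemma lin_pcomp: "(p::'a poly) \<in> linpolys q \<Longrightarrow> r \<in> linpolys q \<Longrightarrow> p \<circ>\<^sub>p r \<in> linpolys q"
  using lin_power[of r] by (auto dest!: lin_ex[of p] simp: pcompose_lsum intro!: lin_sum lin_smult)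

lemma lin_degree: assumes "(p::'a poly) \<in> linpolys q" "p \<noteq> 0" shows "degree p = q ^ qdeg q p"
proof -
  have "coeff p (degree p) \<noteq> 0" using assms by simp
  then obtain j where j: "degree p = q ^ j" using assms unfolding lin_def by blast
  have "qdeg q p = j" unfolding qdeg_def using j by (auto intro!: the_equality simp: q_pow_inj)
  thus ?thesis using j by simp
qed

lemma qdeg_eqI: "degree p = q ^ d \<Longrightarrow> qdeg q p = d"
  unfolding qdeg_def by (rule the_equality) (auto simp: q_pow_inj)

lemma lin_pcomp_nz: assumes "(p::'a poly) \<in> linpolys q" "p \<noteq> 0" "r \<in> linpolys q" "r \<noteq> 0"
  shows "p \<circ>\<^sub>p r \<noteq> 0" "qdeg q (p \<circ>\<^sub>p r) = qdeg q p + qdeg q r"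
    "lead_coeff (p \<circ>\<^sub>p r) = lead_coeff p * lead_coeff r ^ (q ^ qdeg q p)"
proof -
  have dp: "degree p = q ^ qdeg q p" and dr: "degree r = q ^ qdeg q r"
    using lin_degree assms by auto
  have dc: "degree (p \<circ>\<^sub>p r) = q ^ (qdeg q p + qdeg q r)"
    by (simp add: degree_pcompose dp dr power_add)
  thus "p \<circ>\<^sub>p r \<noteq> 0" using q_pow_pos[of "qdeg q p + qdeg q r"] by auto
  show "qdeg q (p \<circ>\<^sub>p r) = qdeg q p + qdeg q r" using dc by (rule qdeg_eqI)
  show "lead_coeff (p \<circ>\<^sub>p r) = lead_coeff p * lead_coeff r ^ (q ^ qdeg q p)"
    using lead_coeff_comp[of r p] dr dp q_pow_pos by simp
qed

lemma lin_pcomp_deg_le: assumes "(p::'a poly) \<in> linpolys q" "r \<in> linpolys q" "p \<circ>\<^sub>p r \<noteq> 0"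
  shows "p \<noteq> 0" "r \<noteq> 0"
  using assms by (auto simp: lin_pcomp_0 pcompose_0)

end


context gab begin

lemma q_pow_le_iff: "q ^ a \<le> q ^ b \<longleftrightarrow> a \<le> b"
  using q_ge2 by (intro power_increasing_iff) auto

lemma q_pow_less_iff: "q ^ a < q ^ b \<longleftrightarrow> a < b"
  using q_ge2 by (intro power_strict_increasing_iff) auto

lemma span_iff: "x \<in> Fq_span q g n \<longleftrightarrow> (\<exists>c. (\<forall>i<n. c i \<in> Fq q) \<and> x = (\<Sum>i<n. c i * g i))"
  by (auto simp: Fq_span_def)

lemma indep_subset: assumes "Fq_lin_indep q (v::nat \<Rightarrow> 'a) J" "I \<subseteq> J" "finite J"
  shows "Fq_lin_indep q v I"
  unfolding Fq_lin_indep_def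
proof (intro allI impI)
  fix c assume c: "(\<forall>i\<in>I. c i \<in> Fq q) \<and> (\<Sum>i\<in>I. c i * v i) = 0"
  define c' where "c' = (\<lambda>i. if i \<in> I then c i else 0)"
  have "(\<Sum>i\<in>J. c' i * v i) = (\<Sum>i\<in>J. if i \<in> I then c i * v i else 0)"
    unfolding c'_def by (intro sum.cong) auto
  also have "\<dots> = (\<Sum>i\<in>I. c i * v i)"
    using assms(2,3) by (simp add: sum.inter_restrict[symmetric] Int_absorb1)
  finally have s0: "(\<Sum>i\<in>J. c' i * v i) = 0" using c by simp
  have "\<forall>i\<in>J. c' i \<in> Fq q" using c by (simp add: c'_def)
  hence "\<forall>i\<in>J. c' i = 0" using assms(1) s0 unfolding Fq_lin_indep_def by blast
  thus "\<forall>i\<in>I. c i = 0" using assms(2) unfolding c'_def by (metis subsetD)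
qed

lemma span_0: "(0::'a) \<in> Fq_span q g n"
  unfolding span_iff by (intro exI[of _ "\<lambda>_. 0"]) simp

lemma span_gen: assumes "i < n" shows "(g i :: 'a) \<in> Fq_span q g n"
proof -
  have "(\<Sum>j<n. (if j = i then 1 else 0) * g j) = (\<Sum>j<n. if j = i then g j else 0)"
    by (intro sum.cong) auto
  also have "\<dots> = g i" using assms by simp
  finally show ?thesis unfolding span_iff
    by (intro exI[of _ "\<lambda>j. if j = i then 1 else 0"]) auto
qed

lemma span_Suc: "Fq_span q (g::nat \<Rightarrow> 'a) (Suc n) =
   (\<lambda>(u, c). u + c * g n) ` (Fq_span q g n \<times> Fq q)"
proof (intro equalityI subsetI)
  fix x assume "x \<in> Fq_span q g (Suc n)"
  then obtain c where c: "\<forall>i<Suc n. c i \<in> Fq q" "x = (\<Sum>i<Suc n. c i * g i)" unfolding span_iff by blast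
  have "(\<Sum>i<n. c i * g i) \<in> Fq_span q g n" unfolding span_iff by (rule exI[of _ c]) (use c(1) in auto)
  moreover have "x = (\<lambda>(u, c). u + c * g n) ((\<Sum>i<n. c i * g i), c n)" using c(2) by simp
  moreover have "c n \<in> Fq q" using c(1) by simp
  ultimately show "x \<in> (\<lambda>(u, c). u + c * g n) ` (Fq_span q g n \<times> Fq q)" by (intro image_eqI) auto
next
  fix x assume "x \<in> (\<lambda>(u, c). u + c * g n) ` (Fq_span q g n \<times> Fq q)"
  then obtain u c0 where u: "u \<in> Fq_span q g n" "c0 \<in> Fq q" "x = u + c0 * g n" by auto
  then obtain c where c: "\<forall>i<n. c i \<in> Fq q" "u = (\<Sum>i<n. c i * g i)" unfolding span_iff by blast
  have "(\<Sum>i<n. (c(n := c0)) i * g i) = (\<Sum>i<n. c i * g i)" by (intro sum.cong) auto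
  hence "x = (\<Sum>i<Suc n. (c(n := c0)) i * g i)" using u c by simp
  thus "x \<in> Fq_span q g (Suc n)" unfolding span_iff using c(1) u(2)
    by (intro exI[of _ "c(n := c0)"]) (auto simp: less_Suc_eq)
qed

lemma span_Suc_inj: assumes ind: "Fq_lin_indep q (g::nat \<Rightarrow> 'a) {..<Suc n}"
  and u: "u \<in> Fq_span q g n" "u' \<in> Fq_span q g n" and c: "c \<in> Fq q" "c' \<in> Fq q"
  and eq: "u + c * g n = u' + c' * g n"
  shows "u = u' \<and> c = c'"
proof -
  obtain a where a: "\<forall>i<n. a i \<in> Fq q" "u = (\<Sum>i<n. a i * g i)" using u(1) unfolding span_iff by blast
  obtain a' where a': "\<forall>i<n. a' i \<in> Fq q" "u' = (\<Sum>i<n. a' i * g i)" using u(2) unfolding span_iff by blast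
  define d where "d = (\<lambda>i. if i < n then a i - a' i else c - c')"
  have "(\<Sum>i<Suc n. d i * g i) = (\<Sum>i<n. (a i - a' i) * g i) + (c - c') * g n"
    unfolding d_def by simp
  also have "\<dots> = (u + c * g n) - (u' + c' * g n)"
    unfolding a(2) a'(2) by (simp add: sum_subtractf left_diff_distrib algebra_simps)
  also have "\<dots> = 0" using eq by simp
  finally have s0: "(\<Sum>i<Suc n. d i * g i) = 0" .
  have "\<forall>i\<in>{..<Suc n}. d i \<in> Fq q" using a a' c by (auto simp: d_def intro: Fq_diff)
  hence "\<forall>i\<in>{..<Suc n}. d i = 0" using ind s0 unfolding Fq_lin_indep_def by blast
  hence "d n = 0" by simp
  hence "c = c'" unfolding d_def by simp
  thus ?thesis using eq by simp
qed

lemma card_span: "Fq_lin_indep q (g::nat \<Rightarrow> 'a) {..<n} \<Longrightarrow> card (Fq_span q g n) = q ^ n"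
proof (induction n)
  case 0 thus ?case by (simp add: Fq_span_def)
next
  case (Suc n)
  have ind: "Fq_lin_indep q g {..<n}" using indep_subset[OF Suc.prems] by auto
  have inj: "inj_on (\<lambda>(u, c). u + c * g n) (Fq_span q g n \<times> Fq q)"
    using span_Suc_inj[OF Suc.prems] by (auto simp: inj_on_def)
  have "card (Fq_span q g (Suc n)) = card ((\<lambda>(u, c). u + c * g n) ` (Fq_span q g n \<times> Fq q))"
    by (simp only: span_Suc)
  also have "\<dots> = card (Fq_span q g n \<times> (Fq q :: 'a set))" by (rule card_image[OF inj])
  finally have "card (Fq_span q g (Suc n)) = card (Fq_span q g n \<times> (Fq q :: 'a set))" .
  thus ?case using Suc.IH[OF ind] card_Fq by (simp add: card_cartesian_product)
qed

lemma root_bound: assumes p: "(p::'a poly) \<in> linpolys q" "p \<noteq> 0" and ind: "Fq_lin_indep q g {..<t}"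
  and van: "\<And>i. i < t \<Longrightarrow> poly p (g i) = 0"
  shows "t \<le> qdeg q p"
proof -
  have sub: "Fq_span q g t \<subseteq> {x. poly p x = 0}"
  proof
    fix x assume "x \<in> Fq_span q g t"
    then obtain c where c: "\<forall>i<t. c i \<in> Fq q" "x = (\<Sum>i<t. c i * g i)" unfolding span_iff by blast
    have "poly p x = (\<Sum>i<t. c i * poly p (g i))" unfolding c(2)
      by (rule lin_poly_lincomb[OF p(1)]) (use c(1) in auto)
    also have "\<dots> = 0" by (intro sum.neutral) (simp add: van)
    finally show "x \<in> {x. poly p x = 0}" by simp
  qed
  have "card (Fq_span q g t) \<le> card {x. poly p x = 0}" by (rule card_mono[OF _ sub]) simp
  hence le1: "q ^ t \<le> card {x. poly p x = 0}" using card_span[OF ind] by simp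
  have le2: "card {x. poly p x = 0} \<le> q ^ qdeg q p"
    using card_poly_roots_bound[OF p(2)] lin_degree[OF p] by simp
  have le: "q ^ t \<le> q ^ qdeg q p" using le1 le2 by (rule order_trans)
  have q1: "1 < q" using q_ge2 by simp
  show ?thesis using power_le_imp_le_exp[OF q1 le] .
qed

lemma prod_Fq_X: "(\<Prod>c\<in>Fq q. [:-c, 1:]) = (XX :: 'a poly)"
proof -
  define Q where "Q = (\<Prod>c\<in>Fq q. [:-c, (1::'a):])"
  have dQ: "degree Q = q" unfolding Q_def
    by (subst degree_prod_sum_eq) (auto simp: card_Fq)
  have lQ: "lead_coeff Q = 1" unfolding Q_def lead_coeff_prod by simp
  have lX: "coeff XX q = 1" unfolding XX_def using q_ge2 by simp
  define D where "D = XX - Q"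
  have cD: "coeff D q = 0" unfolding D_def using lX lQ dQ by simp
  have "degree D \<le> q" unfolding D_def using degree_diff_le_max[of XX Q] dQ degree_XX by simp
  hence dD: "D = 0 \<or> degree D < q" using cD by (metis le_neq_implies_less leading_coeff_0_iff)
  have rD: "Fq q \<subseteq> {x. poly D x = 0}"
  proof
    fix x :: 'a assume x: "x \<in> Fq q"
    have "poly XX x = 0" using x Fq_roots by auto
    moreover have "poly Q x = 0" unfolding Q_def poly_prod using x by (intro prod_zero) auto
    ultimately show "x \<in> {x. poly D x = 0}" by (simp add: D_def)
  qed
  show ?thesis
  proof (rule ccontr)
    assume "(\<Prod>c\<in>Fq q. [:-c, 1:]) \<noteq> XX"
    hence "D \<noteq> 0" unfolding D_def Q_def by simp
    hence "card (Fq q :: 'a set) \<le> degree D"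
      using card_mono[OF _ rD] card_poly_roots_bound[of D] by simp
    thus False using dD \<open>D \<noteq> 0\<close> card_Fq by simp
  qed
qed

lemma prod_Fq_shift: assumes "(a::'a) \<noteq> 0"
  shows "(\<Prod>c\<in>Fq q. Y - [:c * a:]) = Y ^ q - smult (a ^ q / a) Y"
proof -
  define Z where "Z = smult (inverse a) Y"
  have "XX \<circ>\<^sub>p Z = Z ^ q - Z" unfolding XX_def by (simp add: pcompose_diff pcompose_monom)
  also have "XX \<circ>\<^sub>p Z = (\<Prod>c\<in>Fq q. Z - [:c:])"
    unfolding prod_Fq_X[symmetric] pcompose_prod by (intro prod.cong) (auto simp: pcompose_pCons)
  also have "(\<Prod>c\<in>Fq q. Z - [:c:]) = (\<Prod>c\<in>Fq q. smult (inverse a) (Y - [:c * a:]))"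
    unfolding Z_def using assms by (intro prod.cong) (auto simp: smult_diff_right)
  also have "\<dots> = smult (inverse a ^ q) (\<Prod>c\<in>Fq q. Y - [:c * a:])"
    by (simp add: prod_smult card_Fq)
  finally have "smult (a ^ q) (smult (inverse a ^ q) (\<Prod>c\<in>Fq q. Y - [:c * a:])) = smult (a ^ q) (Z ^ q - Z)"
    by simp
  thus ?thesis using assms unfolding Z_def
    by (simp add: smult_diff_right power_inverse field_simps smult_power)
qed

lemma ann_roots: "poly (ann_poly q (g::nat\<Rightarrow>'a) n) x = 0 \<longleftrightarrow> x \<in> Fq_span q g n"
  unfolding ann_poly_def by (simp add: poly_prod)

lemma ann_degree: "Fq_lin_indep q (g::nat \<Rightarrow> 'a) {..<n} \<Longrightarrow> degree (ann_poly q g n) = q ^ n"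
  unfolding ann_poly_def by (subst degree_prod_sum_eq) (auto simp: card_span)

lemma ann_monic: "lead_coeff (ann_poly q (g::nat\<Rightarrow>'a) n) = 1"
  unfolding ann_poly_def lead_coeff_prod by simp

lemma ann_nz: "Fq_lin_indep q (g::nat \<Rightarrow> 'a) {..<n} \<Longrightarrow> ann_poly q g n \<noteq> 0"
  using ann_monic[of g n] by auto

lemma ann_qdeg: "Fq_lin_indep q (g::nat \<Rightarrow> 'a) {..<n} \<Longrightarrow> qdeg q (ann_poly q g n) = n"
  using ann_degree qdeg_eqI by blast

lemma ann_lin: "Fq_lin_indep q (g::nat \<Rightarrow> 'a) {..<n} \<Longrightarrow> ann_poly q g n \<in> linpolys q"
proof (induction n)
  case 0 thus ?case by (simp add: ann_poly_def Fq_span_def lin_X)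
next
  case (Suc n)
  define S where "S = Fq_span q g n"
  define P where "P = ann_poly q g n"
  have ind: "Fq_lin_indep q g {..<n}" using indep_subset[OF Suc.prems] by auto
  have Plin: "P \<in> linpolys q" using Suc.IH[OF ind] P_def by simp
  define a where "a = poly P (g n)"
  have "a \<noteq> 0"
  proof
    assume "a = 0"
    hence "g n \<in> S" unfolding a_def P_def S_def ann_roots .
    hence "g n + 0 * g n = 0 + 1 * g n" by simp
    thus False using span_Suc_inj[OF Suc.prems \<open>g n \<in> S\<close>[unfolded S_def] span_0, of 0 1] by simp
  qed
  have inj: "inj_on (\<lambda>(u, c). u + c * g n) (S \<times> Fq q)"
    using span_Suc_inj[OF Suc.prems] unfolding S_def by (auto simp: inj_on_def)
  have "ann_poly q g (Suc n) = (\<Prod>w\<in>(\<lambda>(u, c). u + c * g n) ` (S \<times> Fq q). [:-w, 1:])"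
    unfolding ann_poly_def span_Suc S_def ..
  also have "\<dots> = (\<Prod>(u, c)\<in>S \<times> Fq q. [:-(u + c * g n), 1:])"
    by (subst prod.reindex[OF inj]) (simp add: case_prod_beta)
  also have "\<dots> = (\<Prod>u\<in>S. \<Prod>c\<in>Fq q. [:-(u + c * g n), 1:])"
    by (simp add: prod.cartesian_product)
  also have "\<dots> = (\<Prod>c\<in>Fq q. \<Prod>u\<in>S. [:-(u + c * g n), 1:])"
    by (rule prod.swap)
  also have "\<dots> = (\<Prod>c\<in>Fq q. P - [:c * a:])"
  proof (intro prod.cong refl)
    fix c :: 'a assume c: "c \<in> Fq q"
    have "(\<Prod>u\<in>S. [:-(u + c * g n), 1:]) = P \<circ>\<^sub>p [:-(c * g n), 1:]"
      unfolding P_def ann_poly_def S_def pcompose_prod by (intro prod.cong) (auto simp: pcompose_pCons)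
    also have "[:-(c * g n), 1:] = [:0, 1:] + [:-(c * g n):]" by simp
    also have "P \<circ>\<^sub>p \<dots> = P + [:poly P (-(c * g n)):]"
      unfolding lin_pcomp_add[OF Plin] by (simp add: pcompose_X pcompose_pCons_0)
    also have "poly P (-(c * g n)) = - (c * a)"
      unfolding a_def lin_poly_uminus[OF Plin] lin_poly_scale[OF Plin c] ..
    finally show "(\<Prod>u\<in>S. [:-(u + c * g n), 1:]) = P - [:c * a:]" by simp
  qed
  also have "\<dots> = P ^ q - smult (a ^ q / a) P" by (rule prod_Fq_shift[OF \<open>a \<noteq> 0\<close>])
  finally have eq: "ann_poly q g (Suc n) = P ^ (q ^ 1) - smult (a ^ q / a) P" by simp
  show ?case unfolding eq by (intro lin_diff lin_power lin_smult Plin)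
qed

lemma lin_division: assumes P: "(P::'a poly) \<in> linpolys q" "lead_coeff P = 1" "degree P = q ^ n"
  and L: "L \<in> linpolys q"
  shows "\<exists>\<beta> \<rho>. \<beta> \<in> linpolys q \<and> \<rho> \<in> linpolys q \<and> L = \<beta> \<circ>\<^sub>p P + \<rho> \<and> (\<rho> = 0 \<or> degree \<rho> < q ^ n)"
  using L
proof (induction "degree L" arbitrary: L rule: less_induct)
  case less
  show ?case
  proof (cases "L = 0 \<or> degree L < q ^ n")
    case True
    thus ?thesis using less.prems by (intro exI[of _ 0] exI[of _ L]) (auto simp: pcompose_0)
  next
    case False
    hence Lnz: "L \<noteq> 0" and dL: "q ^ n \<le> degree L" by auto
    define D where "D = qdeg q L"
    have dLD: "degree L = q ^ D" using lin_degree[OF less.prems Lnz] D_def by simp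
    have nD: "n \<le> D" using dL dLD q_pow_le_iff by simp
    define c where "c = lead_coeff L"
    define T where "T = monom c (q ^ (D - n)) \<circ>\<^sub>p P"
    have T: "T = smult c (P ^ (q ^ (D - n)))" unfolding T_def pcompose_monom ..
    have Pnz: "P \<noteq> 0" using P(2) by auto
    have "degree (P ^ (q ^ (D - n))) = q ^ (D - n) * q ^ n"
      by (simp only: degree_power_eq[OF Pnz] P(3))
    also have "\<dots> = q ^ (D - n + n)" by (simp only: power_add)
    also have "D - n + n = D" using nD by simp
    finally have dPp: "degree (P ^ (q ^ (D - n))) = q ^ D" .
    have "lead_coeff (P ^ (q ^ (D - n))) = 1" by (simp only: lead_coeff_power P(2) power_one)
    hence cPp: "coeff (P ^ (q ^ (D - n))) (q ^ D) = 1" by (simp only: dPp)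
    have cT: "coeff T (q ^ D) = c" unfolding T using cPp by simp
    have dT: "degree T \<le> q ^ D" unfolding T using degree_smult_le[of c "P ^ (q ^ (D - n))"] dPp by simp
    define L' where "L' = L - T"
    have cL': "coeff L' (q ^ D) = 0" unfolding L'_def using cT c_def dLD by simp
    have "degree L' \<le> q ^ D" unfolding L'_def using degree_diff_le_max[of L T] dT dLD by simp
    moreover have "degree L' \<noteq> q ^ D"
    proof
      assume "degree L' = q ^ D"
      hence "L' = 0" using cL' by (metis leading_coeff_0_iff)
      thus False using \<open>degree L' = q ^ D\<close> q_pow_pos[of D] by simp
    qed
    ultimately have dL': "degree L' < degree L" using dLD by simp
    have L'lin: "L' \<in> linpolys q" unfolding L'_def T_def using less.prems P(1)
      by (intro lin_diff lin_pcomp lin_monom)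
    obtain \<beta> \<rho> where br: "\<beta> \<in> linpolys q" "\<rho> \<in> linpolys q" "L' = \<beta> \<circ>\<^sub>p P + \<rho>" "\<rho> = 0 \<or> degree \<rho> < q ^ n"
      using less.hyps[OF dL' L'lin] by blast
    have "L = (\<beta> + monom c (q ^ (D - n))) \<circ>\<^sub>p P + \<rho>"
      using br(3) unfolding L'_def T_def by (simp add: pcompose_add algebra_simps)
    thus ?thesis using br by (intro exI[of _ "\<beta> + monom c (q ^ (D - n))"] exI[of _ \<rho>]) (auto intro: lin_add lin_monom)
  qed
qed

lemma ann_division: assumes ind: "Fq_lin_indep q (g::nat \<Rightarrow> 'a) {..<n}"
  and L: "L \<in> linpolys q" and van: "\<And>i. i < n \<Longrightarrow> poly L (g i) = 0"
  shows "\<exists>\<beta>\<in>linpolys q. L = \<beta> \<circ>\<^sub>p ann_poly q g n"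
proof -
  obtain \<beta> \<rho> where br: "\<beta> \<in> linpolys q" "\<rho> \<in> linpolys q" "L = \<beta> \<circ>\<^sub>p ann_poly q g n + \<rho>"
      "\<rho> = 0 \<or> degree \<rho> < q ^ n"
    using lin_division[OF ann_lin[OF ind] ann_monic ann_degree[OF ind] L] by blast
  have "\<rho> = 0"
  proof (rule ccontr)
    assume rnz: "\<rho> \<noteq> 0"
    have "poly \<rho> (g i) = 0" if "i < n" for i
    proof -
      have "poly (ann_poly q g n) (g i) = 0" unfolding ann_roots using that by (rule span_gen)
      hence "poly (\<beta> \<circ>\<^sub>p ann_poly q g n) (g i) = 0" by (simp add: poly_pcompose lin_poly_0[OF br(1)])
      thus ?thesis using van[OF that] br(3) by (metis add_0 poly_add)
    qed
    hence "n \<le> qdeg q \<rho>" using root_bound[OF br(2) rnz ind] by blast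
    moreover have "q ^ qdeg q \<rho> < q ^ n" using br(4) rnz lin_degree[OF br(2) rnz] by simp
    moreover have "qdeg q \<rho> < n" using calculation(2) q_pow_less_iff by simp
    ultimately show False by simp
  qed
  thus ?thesis using br by auto
qed

end


lemma crh_poly: "comm_ring_hom (\<lambda>p. poly p (x::'a::comm_ring_1))"
  by unfold_locales auto

lemma crh_const: "comm_ring_hom (\<lambda>c. [:c::'a::comm_ring_1:])"
  by unfold_locales (auto simp: one_pCons)

lemma Mmat_carrier: "Mmat q n vs \<in> carrier_mat n (length vs)"
  by (simp add: Mmat_def)

lemma Mmat_index: "j < n \<Longrightarrow> l < length vs \<Longrightarrow> Mmat q n vs $$ (j, l) = (vs ! l) ^ (q ^ j)"
  by (simp add: Mmat_def)

lemma Mmat_hom: assumes "comm_ring_hom h" shows "map_mat h (Mmat q n vs) = Mmat q n (map h vs)"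
proof -
  interpret comm_ring_hom h by fact
  show ?thesis by (rule eq_matI) (auto simp: Mmat_def hom_power)
qed

lemma det_Mmat_hom: assumes "comm_ring_hom h" shows "h (det (Mmat q n vs)) = det (Mmat q n (map h vs))"
  using comm_ring_hom.hom_det[OF assms, of "Mmat q n vs"] Mmat_hom[OF assms] by simp

lemma const_det: assumes "\<And>i j. i < dim_row B \<Longrightarrow> j < dim_col B \<Longrightarrow> \<exists>c. B $$ (i, j) = [:c:]"
  shows "\<exists>c. det B = [:c::'a::comm_ring_1:]"
proof -
  have "B = map_mat (\<lambda>c. [:c:]) (map_mat (\<lambda>p. coeff p 0) B)"
  proof (rule eq_matI)
    fix i j assume "i < dim_row (map_mat (\<lambda>c. [:c:]) (map_mat (\<lambda>p. coeff p 0) B))"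
      "j < dim_col (map_mat (\<lambda>c. [:c:]) (map_mat (\<lambda>p. coeff p 0) B))"
    hence ij: "i < dim_row B" "j < dim_col B" by auto
    then obtain c where "B $$ (i, j) = [:c:]" using assms by blast
    thus "B $$ (i, j) = map_mat (\<lambda>c. [:c:]) (map_mat (\<lambda>p. coeff p 0) B) $$ (i, j)" using ij by simp
  qed auto
  hence "det B = [:det (map_mat (\<lambda>p. coeff p 0) B):]"
    using comm_ring_hom.hom_det[OF crh_const, of "map_mat (\<lambda>p. coeff p 0) B"] by simp
  thus ?thesis by blast
qed

lemma Mmat_swap: assumes "length (ys @ a # b # zs) = n"
  shows "det (Mmat q n (ys @ a # b # zs)) = - det (Mmat q n (ys @ b # a # zs))"
proof -
  let ?k = "length ys"
  let ?A = "Mmat q n (ys @ a # b # zs)"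
  have A: "?A \<in> carrier_mat n n" using Mmat_carrier[of q n "ys @ a # b # zs"] assms by simp
  have "Mmat q n (ys @ b # a # zs) = swapcols ?k (Suc ?k) ?A"
  proof (rule eq_matI)
    fix i j assume ij: "i < dim_row (swapcols ?k (Suc ?k) ?A)" "j < dim_col (swapcols ?k (Suc ?k) ?A)"
    hence i: "i < n" and j: "j < n" using A by auto
    have "(ys @ b # a # zs) ! j = (if ?k = j then (ys @ a # b # zs) ! Suc ?k
       else if Suc ?k = j then (ys @ a # b # zs) ! ?k else (ys @ a # b # zs) ! j)"
      by (cases "j < ?k"; cases "j = ?k"; cases "j = Suc ?k") (auto simp: nth_append nth_Cons' )
    thus "Mmat q n (ys @ b # a # zs) $$ (i, j) = swapcols ?k (Suc ?k) ?A $$ (i, j)"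
      using i j assms A by (auto simp: Mmat_index)
  qed (use A assms in \<open>auto simp: Mmat_def\<close>)
  moreover have "det (swapcols ?k (Suc ?k) ?A) = - det ?A"
    using assms A by (intro det_swapcols) auto
  ultimately show ?thesis by simp
qed

lemma Mmat_move_last: "length (ys @ a # zs) = n \<Longrightarrow>
   det (Mmat q n (ys @ a # zs)) = (-1) ^ length zs * det (Mmat q n (ys @ zs @ [a]))"
proof (induction zs arbitrary: ys)
  case Nil thus ?case by simp
next
  case (Cons b zs)
  have "det (Mmat q n (ys @ a # b # zs)) = - det (Mmat q n ((ys @ [b]) @ a # zs))"
    using Mmat_swap[OF Cons.prems] by simp
  also have "\<dots> = - ((-1) ^ length zs * det (Mmat q n ((ys @ [b]) @ zs @ [a])))"
    using Cons.IH[of "ys @ [b]"] Cons.prems by simp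
  finally show ?case by simp
qed

lemma Mmat_identical: assumes "length vs = n" "a < n" "b < n" "a \<noteq> b" "vs ! a = vs ! b"
  shows "det (Mmat q n vs) = 0"
proof (rule det_identical_columns[of _ n a b])
  show "Mmat q n vs \<in> carrier_mat n n" using Mmat_carrier[of q n vs] assms by simp
  show "col (Mmat q n vs) a = col (Mmat q n vs) b"
    using assms by (intro eq_vecI) (auto simp: Mmat_def)
qed (use assms in auto)

definition LL :: "(nat \<Rightarrow> 'a::comm_ring_1) \<Rightarrow> nat \<Rightarrow> nat \<Rightarrow> 'a poly list" where
  "LL g n i = (let vs = map (\<lambda>l. [:g l:]) [0..<n] @ [[:0, 1:]] in take i vs @ drop (Suc i) vs)"

lemma lagrange_LL: "lagrange_poly q n g r =
   (\<Sum>i<n. smult ((-1) ^ (n - 1 - i) * r i / det (Mmat q n (map g [0..<n]))) (det (Mmat q n (LL g n i))))"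
  unfolding lagrange_poly_def LL_def ..

lemma LL_len: "i < n \<Longrightarrow> length (LL g n i) = n"
  by (simp add: LL_def)

lemma LL_map: "i < n \<Longrightarrow> map (\<lambda>p. poly p x) (LL g n i) =
   take i (map g [0..<n] @ [x]) @ drop (Suc i) (map g [0..<n] @ [x])"
  by (simp add: LL_def take_map drop_map)

lemma LL_last: "i < n \<Longrightarrow> LL g n i ! (n - 1) = [:0, 1:]"
  by (auto simp: LL_def nth_append min_def)

lemma LL_const: "i < n \<Longrightarrow> l < n - 1 \<Longrightarrow> \<exists>c. LL g n i ! l = [:c:]"
  by (auto simp: LL_def nth_append min_def)

context gab begin

lemma lin_neg_pow: "(P::'a poly) \<in> linpolys q \<Longrightarrow> (-1) ^ k * P \<in> linpolys q"
  by (induction k) (auto simp: lin_uminus)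

lemma moore_nz: assumes ind: "Fq_lin_indep q (g::nat \<Rightarrow> 'a) {..<n}"
  shows "det (Mmat q n (map g [0..<n])) \<noteq> 0"
proof
  let ?A = "Mmat q n (map g [0..<n])"
  have A: "?A \<in> carrier_mat n n" using Mmat_carrier[of q n "map g [0..<n]"] by simp
  assume "det ?A = 0"
  hence "det (transpose_mat ?A) = 0" using det_transpose[OF A] by simp
  then obtain w where w: "w \<in> carrier_vec n" "w \<noteq> 0\<^sub>v n" "transpose_mat ?A *\<^sub>v w = 0\<^sub>v n"
    using det_0_iff_vec_prod_zero[of "transpose_mat ?A" n] A by auto
  define p where "p = lsum (\<lambda>j. w $ j) n"
  have van: "poly p (g l) = 0" if l: "l < n" for l
  proof -
    have "(transpose_mat ?A *\<^sub>v w) $ l = 0" using w(3) l by simp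
    moreover have "(transpose_mat ?A *\<^sub>v w) $ l = (\<Sum>j\<in>{0..<n}. g l ^ (q ^ j) * w $ j)"
      using l A w(1) by (simp add: scalar_prod_def Mmat_index)
    moreover have "poly p (g l) = (\<Sum>j<n. w $ j * g l ^ (q ^ j))" unfolding p_def poly_lsum ..
    ultimately show ?thesis by (simp add: atLeast0LessThan mult.commute)
  qed
  obtain j where j: "j < n" "w $ j \<noteq> 0" using w(1,2) by (metis eq_vecI index_zero_vec(1) carrier_vecD index_zero_vec(2))
  have "coeff p (q ^ j) \<noteq> 0" unfolding p_def coeff_lsum_pow using j by simp
  hence pnz: "p \<noteq> 0" by auto
  have plin: "p \<in> linpolys q" unfolding p_def by (rule lin_lsum)
  have "n \<le> qdeg q p" using root_bound[OF plin pnz ind van] by blast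
  moreover have "coeff p (q ^ qdeg q p) \<noteq> 0" using lin_degree[OF plin pnz] pnz
    by (metis leading_coeff_0_iff)
  hence "qdeg q p < n" unfolding p_def coeff_lsum_pow by (auto split: if_splits)
  ultimately show False by simp
qed

lemma D_lin: assumes i: "i < (n::nat)" shows "det (Mmat q n (LL (g::nat\<Rightarrow>'a) n i)) \<in> linpolys q"
proof -
  let ?A = "Mmat q n (LL g n i)"
  have A: "?A \<in> carrier_mat n n" using Mmat_carrier[of q n "LL g n i"] by (simp add: LL_len[OF i])
  have n1: "n - 1 < n" using i by simp
  have "det ?A = (\<Sum>j<n. ?A $$ (j, n - 1) * cofactor ?A j (n - 1))"
    by (rule laplace_expansion_column[OF A n1])
  also have "\<dots> \<in> linpolys q"
  proof (intro lin_sum)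
    fix j assume j: "j \<in> {..<n}"
    have e: "?A $$ (j, n - 1) = monom 1 (q ^ j)"
      using j i LL_last[OF i, of g] by (simp add: Mmat_index LL_len monom_altdef)
    have "\<exists>c. det (mat_delete ?A j (n - 1)) = [:c:]"
    proof (rule const_det)
      fix a b assume ab: "a < dim_row (mat_delete ?A j (n - 1))" "b < dim_col (mat_delete ?A j (n - 1))"
      hence a: "a < n - 1" and b: "b < n - 1" using A by auto
      obtain c where c: "LL g n i ! b = [:c:]" using LL_const[OF i b] by blast
      have "mat_delete ?A j (n - 1) $$ (a, b) = ?A $$ (if a < j then a else Suc a, b)"
        unfolding mat_delete_def using a b A by auto
      also have "\<dots> = [:c:] ^ (q ^ (if a < j then a else Suc a))"
        using a b i c by (simp add: Mmat_index LL_len)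
      also have "\<dots> = [:c ^ (q ^ (if a < j then a else Suc a)):]"
        by (simp add: monoid_mult_hom.hom_power[OF comm_ring_hom.axioms(1)[OF crh_const, THEN ring_hom.axioms(1), THEN semiring_hom.axioms(2)], symmetric])
      finally show "\<exists>c. mat_delete ?A j (n - 1) $$ (a, b) = [:c:]" by blast
    qed
    then obtain c where c: "det (mat_delete ?A j (n - 1)) = [:c:]" by blast
    have "?A $$ (j, n - 1) * cofactor ?A j (n - 1) = (-1) ^ (j + (n - 1)) * monom c (q ^ j)"
      unfolding cofactor_def c e by (simp add: mult_monom mult_ac flip: monom_0)
    thus "?A $$ (j, n - 1) * cofactor ?A j (n - 1) \<in> linpolys q" by (simp add: lin_neg_pow lin_monom)
  qed
  finally show ?thesis .
qed

lemma lagrange_lin: "lagrange_poly q n (g::nat\<Rightarrow>'a) r \<in> linpolys q"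
  unfolding lagrange_LL by (intro lin_sum lin_smult D_lin) auto

lemma D_eval: assumes i: "i < n" and l: "l < n"
  shows "poly (det (Mmat q n (LL (g::nat\<Rightarrow>'a) n i))) (g l) =
    (if l = i then (-1) ^ (n - 1 - i) * det (Mmat q n (map g [0..<n])) else 0)"
proof -
  let ?G = "map g [0..<n]"
  let ?E = "take i (?G @ [g l]) @ drop (Suc i) (?G @ [g l])"
  have "poly (det (Mmat q n (LL g n i))) (g l) = det (Mmat q n ?E)"
  proof -
    have "map (\<lambda>p. poly p (g l)) (LL g n i) = ?E" by (rule LL_map[OF i])
    thus ?thesis using det_Mmat_hom[OF crh_poly, of q n "LL g n i" "g l"] by simp
  qed
  also have "\<dots> = (if l = i then (-1) ^ (n - 1 - i) * det (Mmat q n ?G) else 0)"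
  proof (cases "l = i")
    case True
    have E: "?E = take i ?G @ drop (Suc i) ?G @ [g i]" using i True by simp
    have "?G = take i ?G @ ?G ! i # drop (Suc i) ?G" using i by (intro id_take_nth_drop) simp
    hence "det (Mmat q n ?G) = (-1) ^ length (drop (Suc i) ?G) * det (Mmat q n ?E)"
      using Mmat_move_last[of "take i ?G" "?G ! i" "drop (Suc i) ?G" n] i unfolding E by simp
    hence "det (Mmat q n ?G) = (-1) ^ (n - 1 - i) * det (Mmat q n ?E)" by simp
    hence "(-1) ^ (n - 1 - i) * det (Mmat q n ?G) = ((-1) ^ (n - 1 - i)) ^ 2 * det (Mmat q n ?E)"
      by (simp add: power2_eq_square)
    thus ?thesis using True by (simp add: power_even_eq[symmetric] mult.commute[of "n - 1 - i" 2])
  next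
    case False
    have len: "length ?E = n" using i by simp
    have last: "?E ! (n - 1) = g l" using i by (auto simp: nth_append min_def)
    define p where "p = (if l < i then l else l - 1)"
    have p: "p < n - 1" using False i l unfolding p_def by auto
    have Ep: "?E ! p = g l" using False i l unfolding p_def by (auto simp: nth_append min_def)
    have "det (Mmat q n ?E) = 0"
    proof (rule Mmat_identical[OF len])
      show "p < n" "n - 1 < n" "p \<noteq> n - 1" using p i by auto
      show "?E ! p = ?E ! (n - 1)" using Ep last by simp
    qed
    thus ?thesis using False by simp
  qed
  finally show ?thesis .
qed

lemma lagrange_eval: assumes ind: "Fq_lin_indep q (g::nat \<Rightarrow> 'a) {..<n}" and l: "l < n"
  shows "poly (lagrange_poly q n g r) (g l) = r l"
proof -
  let ?M = "det (Mmat q n (map g [0..<n]))"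
  have M: "?M \<noteq> 0" by (rule moore_nz[OF ind])
  have "poly (lagrange_poly q n g r) (g l) =
     (\<Sum>i<n. (-1) ^ (n - 1 - i) * r i / ?M * (if l = i then (-1) ^ (n - 1 - i) * ?M else 0))"
    unfolding lagrange_LL poly_sum poly_smult by (intro sum.cong refl) (simp add: D_eval l)
  also have "\<dots> = (-1) ^ (n - 1 - l) * r l / ?M * ((-1) ^ (n - 1 - l) * ?M)"
    using l by (simp add: if_distrib sum.delta cong: if_cong)
  also have "\<dots> = ((-1) ^ (n - 1 - l)) ^ 2 * r l" using M by (simp add: field_simps power2_eq_square)
  also have "\<dots> = r l" by (simp add: power_even_eq[symmetric] mult.commute[of "n - 1 - l" 2])
  finally show ?thesis .
qed

end


context gab begin

lemma deg_le_qpow: "(p::'a poly) \<in> linpolys q \<Longrightarrow> p \<noteq> 0 \<Longrightarrow> degree p \<le> q ^ N \<longleftrightarrow> qdeg q p \<le> N"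
  using lin_degree q_pow_le_iff by simp

lemma deg_less_qpow: "(p::'a poly) \<in> linpolys q \<Longrightarrow> p \<noteq> 0 \<Longrightarrow> degree p < q ^ N \<longleftrightarrow> qdeg q p < N"
  using lin_degree q_pow_less_iff by simp

lemma pcomp_deg: assumes "(p::'a poly) \<in> linpolys q" "r \<in> linpolys q" "p \<noteq> 0" "r \<noteq> 0"
  shows "degree (p \<circ>\<^sub>p r) = q ^ (qdeg q p + qdeg q r)"
  using lin_degree[OF lin_pcomp[OF assms(1,2)] lin_pcomp_nz(1)[OF assms(1,3,2,4)]]
    lin_pcomp_nz(2)[OF assms(1,3,2,4)] by simp

lemma D1: assumes lins: "u1 \<in> linpolys q" "v1 \<in> linpolys q" "u2 \<in> linpolys q" "v2 \<in> linpolys q"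
    "\<beta> \<in> linpolys q" "(\<gamma>::'a poly) \<in> linpolys q"
  and nz: "v2 \<noteq> 0" "\<gamma> \<noteq> 0"
  and hv1: "v1 = 0 \<or> qdeg q v1 + K < qdeg q u1"
  and hu2: "u2 = 0 \<or> qdeg q u2 \<le> qdeg q v2 + K"
  and hb: "\<beta> = 0 \<or> qdeg q \<beta> + qdeg q u1 \<le> qdeg q v2 + K + qdeg q \<gamma>"
  shows "\<beta> \<circ>\<^sub>p v1 + \<gamma> \<circ>\<^sub>p v2 \<noteq> 0"
    "qdeg q (\<beta> \<circ>\<^sub>p v1 + \<gamma> \<circ>\<^sub>p v2) = qdeg q v2 + qdeg q \<gamma>"
    "\<beta> \<circ>\<^sub>p u1 + \<gamma> \<circ>\<^sub>p u2 = 0 \<or> qdeg q (\<beta> \<circ>\<^sub>p u1 + \<gamma> \<circ>\<^sub>p u2) \<le> qdeg q v2 + qdeg q \<gamma> + K"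
proof -
  have dS2: "degree (\<gamma> \<circ>\<^sub>p v2) = q ^ (qdeg q \<gamma> + qdeg q v2)" using pcomp_deg lins nz by blast
  have dS1: "degree (\<beta> \<circ>\<^sub>p v1) < q ^ (qdeg q \<gamma> + qdeg q v2)"
  proof (cases "\<beta> = 0 \<or> v1 = 0")
    case True thus ?thesis using lin_pcomp_0[OF lins(5)] q_pow_pos by (auto simp: pcompose_0)
  next
    case False
    hence "degree (\<beta> \<circ>\<^sub>p v1) = q ^ (qdeg q \<beta> + qdeg q v1)" using pcomp_deg lins by blast
    moreover have "qdeg q \<beta> + qdeg q v1 < qdeg q \<gamma> + qdeg q v2" using False hv1 hb by auto
    ultimately show ?thesis using q_pow_less_iff by simp
  qed
  have dS: "degree (\<beta> \<circ>\<^sub>p v1 + \<gamma> \<circ>\<^sub>p v2) = q ^ (qdeg q \<gamma> + qdeg q v2)"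
    using degree_add_eq_right[of "\<beta> \<circ>\<^sub>p v1" "\<gamma> \<circ>\<^sub>p v2"] dS1 dS2 by simp
  thus "\<beta> \<circ>\<^sub>p v1 + \<gamma> \<circ>\<^sub>p v2 \<noteq> 0" using q_pow_pos[of "qdeg q \<gamma> + qdeg q v2"] by auto
  show "qdeg q (\<beta> \<circ>\<^sub>p v1 + \<gamma> \<circ>\<^sub>p v2) = qdeg q v2 + qdeg q \<gamma>" using qdeg_eqI[OF dS] by simp
  let ?N = "qdeg q v2 + qdeg q \<gamma> + K"
  have dT1: "degree (\<beta> \<circ>\<^sub>p u1) \<le> q ^ ?N"
  proof (cases "\<beta> = 0 \<or> u1 = 0")
    case True thus ?thesis using lin_pcomp_0[OF lins(5)] by (auto simp: pcompose_0)
  next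
    case False
    hence "degree (\<beta> \<circ>\<^sub>p u1) = q ^ (qdeg q \<beta> + qdeg q u1)" using pcomp_deg lins by blast
    moreover have "qdeg q \<beta> + qdeg q u1 \<le> ?N" using False hb by auto
    ultimately show ?thesis using q_pow_le_iff by simp
  qed
  have dT2: "degree (\<gamma> \<circ>\<^sub>p u2) \<le> q ^ ?N"
  proof (cases "u2 = 0")
    case True thus ?thesis using lin_pcomp_0[OF lins(6)] by auto
  next
    case False
    hence "degree (\<gamma> \<circ>\<^sub>p u2) = q ^ (qdeg q \<gamma> + qdeg q u2)" using pcomp_deg lins nz by blast
    moreover have "qdeg q \<gamma> + qdeg q u2 \<le> ?N" using False hu2 by auto
    ultimately show ?thesis using q_pow_le_iff by simp
  qed
  have "degree (\<beta> \<circ>\<^sub>p u1 + \<gamma> \<circ>\<^sub>p u2) \<le> q ^ ?N"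
    using degree_add_le[OF dT1 dT2] .
  moreover have "\<beta> \<circ>\<^sub>p u1 + \<gamma> \<circ>\<^sub>p u2 \<in> linpolys q" using lins by (intro lin_add lin_pcomp)
  ultimately show "\<beta> \<circ>\<^sub>p u1 + \<gamma> \<circ>\<^sub>p u2 = 0 \<or> qdeg q (\<beta> \<circ>\<^sub>p u1 + \<gamma> \<circ>\<^sub>p u2) \<le> ?N"
    using deg_le_qpow by blast
qed

lemma D2: assumes lins: "u1 \<in> linpolys q" "v1 \<in> linpolys q" "u2 \<in> linpolys q" "v2 \<in> linpolys q"
    "\<beta> \<in> linpolys q" "(\<gamma>::'a poly) \<in> linpolys q"
  and nz: "u1 \<noteq> 0" "v2 \<noteq> 0"
  and hv1: "v1 = 0 \<or> qdeg q v1 + K < qdeg q u1"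
  and hu2: "u2 = 0 \<or> qdeg q u2 \<le> qdeg q v2 + K"
  and hE: "\<beta> \<circ>\<^sub>p v1 + \<gamma> \<circ>\<^sub>p v2 \<noteq> 0"
  and hF: "\<beta> \<circ>\<^sub>p u1 + \<gamma> \<circ>\<^sub>p u2 = 0 \<or>
      qdeg q (\<beta> \<circ>\<^sub>p u1 + \<gamma> \<circ>\<^sub>p u2) \<le> qdeg q (\<beta> \<circ>\<^sub>p v1 + \<gamma> \<circ>\<^sub>p v2) + K"
  shows "\<gamma> \<noteq> 0" "\<beta> = 0 \<or> qdeg q \<beta> + qdeg q u1 \<le> qdeg q v2 + K + qdeg q \<gamma>"
proof -
  show gnz: "\<gamma> \<noteq> 0"
  proof
    assume g0: "\<gamma> = 0"
    hence E: "\<beta> \<circ>\<^sub>p v1 + \<gamma> \<circ>\<^sub>p v2 = \<beta> \<circ>\<^sub>p v1" and F: "\<beta> \<circ>\<^sub>p u1 + \<gamma> \<circ>\<^sub>p u2 = \<beta> \<circ>\<^sub>p u1"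
      by (auto simp: pcompose_0)
    have bv: "\<beta> \<noteq> 0" "v1 \<noteq> 0" using hE E lin_pcomp_0[OF lins(5)] by (auto simp: pcompose_0)
    have "\<beta> \<circ>\<^sub>p u1 \<noteq> 0" using lin_pcomp_nz(1)[OF lins(5) bv(1) lins(1) nz(1)] .
    hence "qdeg q (\<beta> \<circ>\<^sub>p u1) \<le> qdeg q (\<beta> \<circ>\<^sub>p v1) + K" using hF E F by simp
    hence "qdeg q \<beta> + qdeg q u1 \<le> qdeg q \<beta> + qdeg q v1 + K"
      using lin_pcomp_nz(2)[OF lins(5) bv(1) lins(1) nz(1)] lin_pcomp_nz(2)[OF lins(5) bv(1) lins(2) bv(2)]
      by simp
    thus False using hv1 bv(2) by simp
  qed
  show "\<beta> = 0 \<or> qdeg q \<beta> + qdeg q u1 \<le> qdeg q v2 + K + qdeg q \<gamma>"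
  proof (rule ccontr)
    assume "\<not> ?thesis"
    hence bnz: "\<beta> \<noteq> 0" and XY: "qdeg q v2 + K + qdeg q \<gamma> < qdeg q \<beta> + qdeg q u1" by auto
    define X where "X = qdeg q \<beta> + qdeg q u1"
    have dT1: "degree (\<beta> \<circ>\<^sub>p u1) = q ^ X" unfolding X_def using pcomp_deg lins bnz nz by blast
    have dT2: "degree (\<gamma> \<circ>\<^sub>p u2) < q ^ X"
    proof (cases "u2 = 0")
      case True thus ?thesis using lin_pcomp_0[OF lins(6)] q_pow_pos by auto
    next
      case False
      hence "degree (\<gamma> \<circ>\<^sub>p u2) = q ^ (qdeg q \<gamma> + qdeg q u2)" using pcomp_deg lins gnz by blast
      moreover have "qdeg q \<gamma> + qdeg q u2 < X" using False hu2 XY unfolding X_def by auto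
      ultimately show ?thesis using q_pow_less_iff by simp
    qed
    have dT: "degree (\<beta> \<circ>\<^sub>p u1 + \<gamma> \<circ>\<^sub>p u2) = q ^ X"
      using degree_add_eq_left[of "\<gamma> \<circ>\<^sub>p u2" "\<beta> \<circ>\<^sub>p u1"] dT1 dT2 by simp
    hence Tnz: "\<beta> \<circ>\<^sub>p u1 + \<gamma> \<circ>\<^sub>p u2 \<noteq> 0" using q_pow_pos[of X] by auto
    have qT: "qdeg q (\<beta> \<circ>\<^sub>p u1 + \<gamma> \<circ>\<^sub>p u2) = X" using qdeg_eqI[OF dT] .
    have KX: "K \<le> X" using XY unfolding X_def by simp
    have dS2: "degree (\<gamma> \<circ>\<^sub>p v2) < q ^ (X - K)"
    proof -
      have "degree (\<gamma> \<circ>\<^sub>p v2) = q ^ (qdeg q \<gamma> + qdeg q v2)" using pcomp_deg lins gnz nz by blast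
      moreover have "qdeg q \<gamma> + qdeg q v2 < X - K" using XY unfolding X_def by simp
      ultimately show ?thesis using q_pow_less_iff by simp
    qed
    have dS1: "degree (\<beta> \<circ>\<^sub>p v1) < q ^ (X - K)"
    proof (cases "v1 = 0")
      case True thus ?thesis using lin_pcomp_0[OF lins(5)] q_pow_pos by auto
    next
      case False
      hence "degree (\<beta> \<circ>\<^sub>p v1) = q ^ (qdeg q \<beta> + qdeg q v1)" using pcomp_deg lins bnz by blast
      moreover have "qdeg q \<beta> + qdeg q v1 < X - K" using False hv1 unfolding X_def by simp
      ultimately show ?thesis using q_pow_less_iff by simp
    qed
    have "degree (\<beta> \<circ>\<^sub>p v1 + \<gamma> \<circ>\<^sub>p v2) < q ^ (X - K)"
      using degree_add_le_max[of "\<beta> \<circ>\<^sub>p v1" "\<gamma> \<circ>\<^sub>p v2"] dS1 dS2 by simp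
    moreover have "\<beta> \<circ>\<^sub>p v1 + \<gamma> \<circ>\<^sub>p v2 \<in> linpolys q" using lins by (intro lin_add lin_pcomp)
    ultimately have "qdeg q (\<beta> \<circ>\<^sub>p v1 + \<gamma> \<circ>\<^sub>p v2) < X - K" using deg_less_qpow hE by blast
    thus False using hF Tnz qT KX by simp
  qed
qed

end


lemma mon_less_asym: "mon_less k a b \<Longrightarrow> \<not> mon_less k b a"
  by (auto simp: mon_less_def)

context gab begin

lemma coeff_qpow_bound: assumes "(p::'a poly) \<in> linpolys q" "coeff p (q ^ i) \<noteq> 0"
  shows "p \<noteq> 0" "i \<le> qdeg q p"
proof -
  show pnz: "p \<noteq> 0" using assms(2) by auto
  have "q ^ i \<le> degree p" using assms(2) by (rule le_degree)
  thus "i \<le> qdeg q p" using lin_degree[OF assms(1) pnz] q_pow_le_iff by simp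
qed

lemma coeff_qdeg: "(p::'a poly) \<in> linpolys q \<Longrightarrow> p \<noteq> 0 \<Longrightarrow> coeff p (q ^ qdeg q p) \<noteq> 0"
  using lin_degree[of p] by (metis leading_coeff_0_iff)

lemma lm_char: assumes l1: "(f1::'a poly) \<in> linpolys q" and l2: "f2 \<in> linpolys q"
  and nz: "(f1, f2) \<noteq> (0, 0)"
  shows "lm q k (f1, f2) = (if f2 \<noteq> 0 \<and> (f1 = 0 \<or> qdeg q f1 \<le> qdeg q f2 + (k - 1))
     then (qdeg q f2, 2) else (qdeg q f1, 1))" (is "_ = ?mu")
proof -
  have mem: "?mu \<in> mons q (f1, f2)"
  proof (cases "f2 \<noteq> 0 \<and> (f1 = 0 \<or> qdeg q f1 \<le> qdeg q f2 + (k - 1))")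
    case True thus ?thesis using coeff_qdeg[OF l2] by (simp add: mons_def comp_def)
  next
    case False
    hence "f1 \<noteq> 0" using nz by auto
    thus ?thesis using False coeff_qdeg[OF l1] by (auto simp: mons_def comp_def)
  qed
  have mx: "mon_less k \<nu> ?mu" if \<nu>: "\<nu> \<in> mons q (f1, f2)" "\<nu> \<noteq> ?mu" for \<nu>
  proof -
    obtain i j where ij: "\<nu> = (i, j)" by (cases \<nu>)
    have j: "j = 1 \<or> j = 2" using \<nu>(1) ij by (auto simp: mons_def)
    show ?thesis
    proof (cases "j = 1")
      case True
      have c: "coeff f1 (q ^ i) \<noteq> 0" using \<nu>(1) ij True by (auto simp: mons_def comp_def)
      note b = coeff_qpow_bound[OF l1 c]
      show ?thesis
      proof (cases "f2 \<noteq> 0 \<and> (f1 = 0 \<or> qdeg q f1 \<le> qdeg q f2 + (k - 1))")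
        case True2: True
        thus ?thesis using b ij True by (auto simp: mon_less_def mweight_def)
      next
        case False2: False
        thus ?thesis using b ij True \<nu>(2) by (auto simp: mon_less_def mweight_def)
      qed
    next
      case False
      hence j2: "j = 2" using j by simp
      have c: "coeff f2 (q ^ i) \<noteq> 0" using \<nu>(1) ij j2 by (auto simp: mons_def comp_def)
      note b = coeff_qpow_bound[OF l2 c]
      show ?thesis
      proof (cases "f2 \<noteq> 0 \<and> (f1 = 0 \<or> qdeg q f1 \<le> qdeg q f2 + (k - 1))")
        case True2: True
        thus ?thesis using b ij j2 \<nu>(2) by (auto simp: mon_less_def mweight_def)
      next
        case False2: False
        thus ?thesis using b ij j2 by (auto simp: mon_less_def mweight_def)
      qed
    qed
  qed
  show ?thesis unfolding lm_def
  proof (rule the_equality)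
    show "?mu \<in> mons q (f1, f2) \<and> (\<forall>\<nu>\<in>mons q (f1, f2). \<nu> \<noteq> ?mu \<longrightarrow> mon_less k \<nu> ?mu)"
      using mem mx by blast
  next
    fix x assume x: "x \<in> mons q (f1, f2) \<and> (\<forall>\<nu>\<in>mons q (f1, f2). \<nu> \<noteq> x \<longrightarrow> mon_less k \<nu> x)"
    show "x = ?mu"
    proof (rule ccontr)
      assume ne: "x \<noteq> ?mu"
      hence "mon_less k ?mu x" using x mem by auto
      moreover have "mon_less k x ?mu" using mx x ne by blast
      ultimately show False using mon_less_asym by blast
    qed
  qed
qed

lemma lpos2: assumes "(f1::'a poly) \<in> linpolys q" "f2 \<in> linpolys q" "(f1, f2) \<noteq> (0, 0)"
  "lpos q k (f1, f2) = 2"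
  shows "f2 \<noteq> 0 \<and> (f1 = 0 \<or> qdeg q f1 \<le> qdeg q f2 + (k - 1))"
  using assms(4) unfolding lpos_def lm_char[OF assms(1-3)] by (auto split: if_splits)

lemma lpos1: assumes "(f1::'a poly) \<in> linpolys q" "f2 \<in> linpolys q" "(f1, f2) \<noteq> (0, 0)"
  "lpos q k (f1, f2) = 1"
  shows "f1 \<noteq> 0 \<and> (f2 = 0 \<or> qdeg q f2 + (k - 1) < qdeg q f1)"
  using assms(3,4) unfolding lpos_def lm_char[OF assms(1-3)] by (auto split: if_splits)

lemma wqdeg2: assumes "1 \<le> k" "f2 \<noteq> 0" "f1 = 0 \<or> qdeg q f1 \<le> qdeg q f2 + (k - 1)"
  shows "wqdeg q k (f1, f2) = int (qdeg q f2) + int k - 1"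
  using assms by (auto simp: wqdeg_def)

lemma wqdeg1: assumes "f1 \<noteq> 0" "f2 = 0 \<or> qdeg q f2 + (k - 1) < qdeg q f1" "1 \<le> k"
  shows "wqdeg q k (f1, f2) = int (qdeg q f1)"
  using assms by (auto simp: wqdeg_def)

definition rkset :: "(nat \<Rightarrow> 'a) \<Rightarrow> nat \<Rightarrow> nat set" where
  "rkset ev n = {card I | I. I \<subseteq> {..<n} \<and> Fq_lin_indep q ev I}"

lemma rank_dist_rkset: "rank_dist q n a b = Max (rkset (\<lambda>i. a i - b i) n)"
  unfolding rank_dist_def rkset_def ..

lemma rkset_finite: "finite (rkset ev n)"
proof (rule finite_subset[of _ "{..n}"])
  show "rkset ev n \<subseteq> {..n}"
  proof
    fix x assume "x \<in> rkset ev n"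
    then obtain I where I: "I \<subseteq> {..<n}" "x = card I" unfolding rkset_def by blast
    have "card I \<le> card {..<n}" using I(1) by (intro card_mono) auto
    thus "x \<in> {..n}" using I(2) by simp
  qed
qed simp

lemma rkset_mem: "x \<in> rkset ev n \<longleftrightarrow> (\<exists>I. x = card I \<and> I \<subseteq> {..<n} \<and> Fq_lin_indep q ev I)"
  unfolding rkset_def by blast

lemma rkset_ne: "rkset ev n \<noteq> {}"
proof -
  have "Fq_lin_indep q ev {}" unfolding Fq_lin_indep_def by simp
  hence "card ({}::nat set) \<in> rkset ev n" unfolding rkset_mem by (intro exI[of _ "{}"]) simp
  thus ?thesis by blast
qed

lemma rk_obtain: obtains I where "I \<subseteq> {..<n}" "Fq_lin_indep q ev I" "card I = Max (rkset ev n)"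
proof -
  have "Max (rkset ev n) \<in> rkset ev n" by (rule Max_in[OF rkset_finite rkset_ne])
  hence "\<exists>I. Max (rkset ev n) = card I \<and> I \<subseteq> {..<n} \<and> Fq_lin_indep q ev I" by (simp only: rkset_mem)
  thus ?thesis using that by metis
qed

lemma rk_ge: "I \<subseteq> {..<n} \<Longrightarrow> Fq_lin_indep q ev I \<Longrightarrow> card I \<le> Max (rkset ev n)"
  by (rule Max_ge[OF rkset_finite]) (simp only: rkset_mem, blast)

lemma reindex_indep: assumes h: "bij_betw h {..<t} I" and ind: "Fq_lin_indep q (ev::nat \<Rightarrow> 'a) I"
  shows "Fq_lin_indep q (ev \<circ> h) {..<t}"
  unfolding Fq_lin_indep_def
proof (intro allI impI)
  fix c assume c: "(\<forall>i\<in>{..<t}. c i \<in> Fq q) \<and> (\<Sum>i\<in>{..<t}. c i * (ev \<circ> h) i) = 0"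
  define c' where "c' = (\<lambda>i. c (inv_into {..<t} h i))"
  have hinv: "inv_into {..<t} h (h s) = s" if "s < t" for s
    using h that by (simp add: bij_betw_def inv_into_f_f)
  have "(\<Sum>i\<in>I. c' i * ev i) = (\<Sum>s\<in>{..<t}. c' (h s) * ev (h s))"
    using sum.reindex_bij_betw[OF h, of "\<lambda>i. c' i * ev i"] by simp
  also have "\<dots> = (\<Sum>s\<in>{..<t}. c s * (ev \<circ> h) s)" by (intro sum.cong) (auto simp: c'_def hinv)
  also have "\<dots> = 0" using c by simp
  finally have s0: "(\<Sum>i\<in>I. c' i * ev i) = 0" .
  have "\<forall>i\<in>I. c' i \<in> Fq q"
  proof
    fix i assume "i \<in> I"
    hence "inv_into {..<t} h i \<in> {..<t}" using h by (metis bij_betw_def inv_into_into)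
    thus "c' i \<in> Fq q" using c unfolding c'_def by blast
  qed
  hence z: "\<forall>i\<in>I. c' i = 0" using ind s0 unfolding Fq_lin_indep_def by blast
  show "\<forall>i\<in>{..<t}. c i = 0"
  proof
    fix s assume s: "s \<in> {..<t}"
    hence "h s \<in> I" using h by (auto simp: bij_betw_def)
    thus "c s = 0" using z s hinv unfolding c'_def by fastforce
  qed
qed

lemma rank_upper: assumes G: "(G::'a poly) \<in> linpolys q" "G \<noteq> 0"
  and van: "\<And>l. l < n \<Longrightarrow> poly G (ev l) = 0"
  shows "Max (rkset ev n) \<le> qdeg q G"
proof -
  obtain I where I: "I \<subseteq> {..<n}" "Fq_lin_indep q ev I" "card I = Max (rkset ev n)" by (rule rk_obtain)
  have fI: "finite I" using I(1) finite_subset by blast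
  obtain h where h: "bij_betw h {..<card I} I"
    using ex_bij_betw_nat_finite[OF fI] by (auto simp: atLeast0LessThan)
  have ind: "Fq_lin_indep q (ev \<circ> h) {..<card I}" by (rule reindex_indep[OF h I(2)])
  have "card I \<le> qdeg q G"
  proof (rule root_bound[OF G ind])
    fix s assume "s < card I"
    hence "h s \<in> I" using h by (auto simp: bij_betw_def)
    thus "poly G ((ev \<circ> h) s) = 0" using I(1) van by auto
  qed
  thus ?thesis using I(3) by simp
qed

lemma rank_ann: "\<exists>E. E \<in> linpolys q \<and> E \<noteq> 0 \<and> qdeg q E = Max (rkset (ev::nat \<Rightarrow> 'a) n) \<and>
    (\<forall>l<n. poly E (ev l) = 0)"
proof -
  obtain I where I: "I \<subseteq> {..<n}" "Fq_lin_indep q ev I" "card I = Max (rkset ev n)" by (rule rk_obtain)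
  define t where "t = card I"
  have fI: "finite I" using I(1) finite_subset by blast
  obtain h where h: "bij_betw h {..<t} I"
    using ex_bij_betw_nat_finite[OF fI] by (auto simp: atLeast0LessThan t_def)
  define w where "w = ev \<circ> h"
  have ind: "Fq_lin_indep q w {..<t}" unfolding w_def by (rule reindex_indep[OF h I(2)])
  define E where "E = ann_poly q w t"
  have van: "poly E (ev l) = 0" if l: "l < n" for l
  proof -
    have "ev l \<in> Fq_span q w t"
    proof (cases "l \<in> I")
      case True
      then obtain s where s: "s < t" "l = h s" using h by (auto simp: bij_betw_def)
      thus ?thesis using span_gen[OF s(1), of w] unfolding w_def by simp
    next
      case False
      have sub: "insert l I \<subseteq> {..<n}" using I(1) l by auto
      have "card (insert l I) = Suc t" using False fI t_def by simp
      hence "\<not> Fq_lin_indep q ev (insert l I)" using rk_ge[OF sub, of ev] I(3) t_def by auto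
      then obtain c where c: "\<forall>i\<in>insert l I. c i \<in> Fq q" "(\<Sum>i\<in>insert l I. c i * ev i) = 0"
          "\<exists>i\<in>insert l I. c i \<noteq> 0"
        unfolding Fq_lin_indep_def by blast
      have sumI: "c l * ev l + (\<Sum>i\<in>I. c i * ev i) = 0" using c(2) False fI by simp
      have cl: "c l \<noteq> 0"
      proof
        assume "c l = 0"
        hence "(\<Sum>i\<in>I. c i * ev i) = 0" using sumI by simp
        hence "\<forall>i\<in>I. c i = 0" using I(2) c(1) unfolding Fq_lin_indep_def by blast
        thus False using c(3) \<open>c l = 0\<close> by auto
      qed
      have "ev l = (\<Sum>i\<in>I. (- (c i / c l)) * ev i)"
      proof -
        have "c l * ev l = - (\<Sum>i\<in>I. c i * ev i)" using sumI by (simp add: eq_neg_iff_add_eq_0)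
        hence "inverse (c l) * (c l * ev l) = inverse (c l) * (- (\<Sum>i\<in>I. c i * ev i))" by simp
        moreover have "inverse (c l) * (c l * ev l) = (inverse (c l) * c l) * ev l" by (rule mult.assoc[symmetric])
        moreover have "(inverse (c l) * c l) * ev l = ev l" using cl by simp
        ultimately have "ev l = (\<Sum>i\<in>I. c i * ev i) * (- inverse (c l))" by (simp add: mult.commute)
        moreover have "(\<Sum>i\<in>I. (- (c i / c l)) * ev i) = (\<Sum>i\<in>I. c i * ev i) * (- inverse (c l))"
          unfolding sum_distrib_right by (intro sum.cong refl) (simp add: divide_inverse mult_ac)
        ultimately show ?thesis by simp
      qed
      also have "\<dots> = (\<Sum>s<t. (- (c (h s) / c l)) * w s)"
        using sum.reindex_bij_betw[OF h, of "\<lambda>i. (- (c i / c l)) * ev i"] unfolding w_def by simp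
      finally have el: "ev l = (\<Sum>s<t. (- (c (h s) / c l)) * w s)" .
      have "\<forall>s<t. - (c (h s) / c l) \<in> Fq q"
      proof (intro allI impI)
        fix s assume "s < t"
        hence "h s \<in> I" using h by (auto simp: bij_betw_def)
        hence "c (h s) \<in> Fq q" "c l \<in> Fq q" using c(1) by auto
        thus "- (c (h s) / c l) \<in> Fq q" by (intro Fq_uminus Fq_divide)
      qed
      thus ?thesis unfolding span_iff using el by (intro exI[of _ "\<lambda>s. - (c (h s) / c l)"]) simp
    qed
    thus ?thesis unfolding E_def ann_roots .
  qed
  show ?thesis
  proof (intro exI[of _ E] conjI allI impI)
    show "E \<in> linpolys q" "E \<noteq> 0" unfolding E_def using ann_lin[OF ind] ann_nz[OF ind] by auto
    show "qdeg q E = Max (rkset ev n)" unfolding E_def using ann_qdeg[OF ind] I(3) t_def by simp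
    show "poly E (ev l) = 0" if "l < n" for l using van that .
  qed
qed

end


lemma lcomp_simp: "lcomp \<beta> (a, b) = (\<beta> \<circ>\<^sub>p a, \<beta> \<circ>\<^sub>p b)" by (simp add: lcomp_def)
lemma padd_simp: "padd (a, b) (c, d) = (a + c, b + d)" by (simp add: padd_def)

lemma qdeg_uminus: "qdeg q (- p) = qdeg q p"
  by (simp add: qdeg_def)

lemma qdeg_smult: "(c::'a::field) \<noteq> 0 \<Longrightarrow> qdeg q (smult c p) = qdeg q p"
  by (simp add: qdeg_def)

context gab begin

definition good :: "(nat \<Rightarrow> 'a) \<Rightarrow> (nat \<Rightarrow> 'a) \<Rightarrow> nat \<Rightarrow> 'a poly \<times> 'a poly \<Rightarrow> bool" where
  "good g r n f \<longleftrightarrow> fst f \<in> linpolys q \<and> snd f \<in> linpolys q \<and>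
     (\<exists>P\<in>linpolys q. fst f = P \<circ>\<^sub>p ann_poly q g n - snd f \<circ>\<^sub>p lagrange_poly q n g r)"

lemma good_module: assumes ind: "Fq_lin_indep q (g::nat \<Rightarrow> 'a) {..<n}" and f: "f \<in> interp_module q n g r"
  shows "good g r n f"
proof -
  obtain \<beta> \<gamma> where bg: "\<beta> \<in> linpolys q" "\<gamma> \<in> linpolys q"
    "f = padd (lcomp \<beta> (ann_poly q g n, 0)) (lcomp \<gamma> (- lagrange_poly q n g r, [:0, 1:]))"
    using f unfolding interp_module_def by blast
  have f: "f = (\<beta> \<circ>\<^sub>p ann_poly q g n - \<gamma> \<circ>\<^sub>p lagrange_poly q n g r, \<gamma>)"
    using bg by (simp add: lcomp_simp padd_simp lin_pcomp_0 lin_pcomp_uminus pcompose_idR)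
  show ?thesis unfolding good_def f fst_conv snd_conv
    using bg(1,2) ann_lin[OF ind] lagrange_lin by (auto intro!: lin_diff lin_pcomp)
qed

lemma good_lcomp: assumes f: "good g r n f" and b: "\<beta> \<in> linpolys q" shows "good g r n (lcomp \<beta> f)"
proof -
  obtain P where P: "P \<in> linpolys q" "fst f = P \<circ>\<^sub>p ann_poly q g n - snd f \<circ>\<^sub>p lagrange_poly q n g r"
    using f unfolding good_def by blast
  have "fst (lcomp \<beta> f) = (\<beta> \<circ>\<^sub>p P) \<circ>\<^sub>p ann_poly q g n - snd (lcomp \<beta> f) \<circ>\<^sub>p lagrange_poly q n g r"
    unfolding lcomp_def fst_conv snd_conv P(2) lin_pcomp_diff[OF b] by (simp add: pcompose_assoc)
  moreover have "fst (lcomp \<beta> f) \<in> linpolys q" "snd (lcomp \<beta> f) \<in> linpolys q"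
    using f b unfolding good_def lcomp_def by (auto intro: lin_pcomp)
  moreover have "\<beta> \<circ>\<^sub>p P \<in> linpolys q" using b P(1) by (rule lin_pcomp)
  ultimately show ?thesis unfolding good_def by blast
qed

lemma good_padd: assumes f: "good g r n f" and h: "good g r n h" shows "good g r n (padd f h)"
proof -
  obtain P where P: "P \<in> linpolys q" "fst f = P \<circ>\<^sub>p ann_poly q g n - snd f \<circ>\<^sub>p lagrange_poly q n g r"
    using f unfolding good_def by blast
  obtain P' where P': "P' \<in> linpolys q" "fst h = P' \<circ>\<^sub>p ann_poly q g n - snd h \<circ>\<^sub>p lagrange_poly q n g r"
    using h unfolding good_def by blast
  have "fst (padd f h) = (P + P') \<circ>\<^sub>p ann_poly q g n - snd (padd f h) \<circ>\<^sub>p lagrange_poly q n g r"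
    unfolding padd_def fst_conv snd_conv P(2) P'(2) by (simp add: pcompose_add)
  moreover have "fst (padd f h) \<in> linpolys q" "snd (padd f h) \<in> linpolys q"
    using f h unfolding good_def padd_def by (auto intro: lin_add)
  moreover have "P + P' \<in> linpolys q" using P(1) P'(1) by (rule lin_add)
  ultimately show ?thesis unfolding good_def by blast
qed

lemma good_vanish: assumes ind: "Fq_lin_indep q (g::nat \<Rightarrow> 'a) {..<n}" and f: "good g r n f"
  and eq: "fst f = - (snd f \<circ>\<^sub>p mp)" and l: "l < n"
  shows "poly (snd f) (poly mp (g l) - r l) = 0"
proof -
  obtain P where P: "P \<in> linpolys q" "fst f = P \<circ>\<^sub>p ann_poly q g n - snd f \<circ>\<^sub>p lagrange_poly q n g r"
    using f unfolding good_def by blast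
  have G: "snd f \<in> linpolys q" using f unfolding good_def by blast
  have "poly (ann_poly q g n) (g l) = 0" unfolding ann_roots by (rule span_gen[OF l])
  hence "poly (fst f) (g l) = - poly (snd f) (r l)"
    unfolding P(2) using lagrange_eval[OF ind l] lin_poly_0[OF P(1)] by (simp add: poly_pcompose)
  moreover have "poly (fst f) (g l) = - poly (snd f) (poly mp (g l))"
    unfolding eq by (simp add: poly_pcompose)
  ultimately show ?thesis unfolding lin_poly_diff[OF G] by simp
qed

lemma module_member: assumes ind: "Fq_lin_indep q (g::nat \<Rightarrow> 'a) {..<n}" and E: "E \<in> linpolys q"
  and mp: "mp \<in> linpolys q" and van: "\<And>l. l < n \<Longrightarrow> poly E (poly mp (g l) - r l) = 0"
  shows "(- (E \<circ>\<^sub>p mp), E) \<in> interp_module q n g r"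
proof -
  define L where "L = E \<circ>\<^sub>p (lagrange_poly q n g r - mp)"
  have Llin: "L \<in> linpolys q" unfolding L_def using E mp lagrange_lin by (intro lin_pcomp lin_diff)
  have "poly L (g l) = 0" if l: "l < n" for l
  proof -
    have "poly L (g l) = poly E (r l - poly mp (g l))"
      unfolding L_def using lagrange_eval[OF ind l] by (simp add: poly_pcompose)
    also have "r l - poly mp (g l) = - (poly mp (g l) - r l)" by simp
    also have "poly E \<dots> = 0" unfolding lin_poly_uminus[OF E] van[OF l] by simp
    finally show ?thesis .
  qed
  then obtain \<beta> where b: "\<beta> \<in> linpolys q" "L = \<beta> \<circ>\<^sub>p ann_poly q g n"
    using ann_division[OF ind Llin] by blast
  have "padd (lcomp \<beta> (ann_poly q g n, 0)) (lcomp E (- lagrange_poly q n g r, [:0, 1:])) = (- (E \<circ>\<^sub>p mp), E)"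
    using b(2)[symmetric] unfolding L_def
    by (simp add: lcomp_simp padd_simp lin_pcomp_0[OF b(1)] lin_pcomp_uminus[OF E] lin_pcomp_diff[OF E] pcompose_idR)
  thus ?thesis unfolding interp_module_def mem_Collect_eq
    by (intro exI[of _ \<beta>] exI[of _ E]) (simp add: b(1) E)
qed

end


context gab begin

context
  fixes k n :: nat and g r :: "nat \<Rightarrow> 'a" and b1 b2 :: "'a poly \<times> 'a poly"
  assumes k1: "1 \<le> k" and kn: "k \<le> n" and ind: "Fq_lin_indep q g {..<n}"
    and mb: "minimal_basis q k (interp_module q n g r) {b1, b2}"
    and lp1: "lpos q k b1 = 1" and lp2: "lpos q k b2 = 2"
begin

lemma basis: "is_basis q (interp_module q n g r) {b1, b2}"
  using mb unfolding minimal_basis_def by blast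

lemma b12: "b1 \<noteq> b2" using lp1 lp2 by auto

lemma lcomb2: "lcomb {b1, b2} a = padd (lcomp (a b1) b1) (lcomp (a b2) b2)"
  using b12 by (simp add: lcomb_def padd_def)

lemma bM: "b1 \<in> interp_module q n g r" "b2 \<in> interp_module q n g r"
  using basis unfolding is_basis_def by auto

lemma good_b: "good g r n b1" "good g r n b2"
  using good_module[OF ind] bM by auto

lemma lins: "fst b1 \<in> linpolys q" "snd b1 \<in> linpolys q" "fst b2 \<in> linpolys q" "snd b2 \<in> linpolys q"
  using good_b unfolding good_def by auto

lemma indep_basis: "(\<forall>h\<in>{b1, b2}. a h \<in> linpolys q) \<Longrightarrow> lcomb {b1, b2} a = (0, 0) \<Longrightarrow> \<forall>h\<in>{b1, b2}. a h = 0"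
  using basis unfolding is_basis_def by blast

lemma X_nz: "[:0, 1::'a:] \<noteq> 0" by simp

lemma b_nz: "b1 \<noteq> (0, 0)" "b2 \<noteq> (0, 0)"
proof -
  show "b1 \<noteq> (0, 0)"
  proof
    assume b: "b1 = (0, 0)"
    define a where "a = (\<lambda>h. if h = b1 then [:0, 1::'a:] else 0)"
    have "\<forall>h\<in>{b1, b2}. a h \<in> linpolys q" unfolding a_def using lin_X by auto
    moreover have "lcomb {b1, b2} a = (0, 0)" unfolding lcomb2 a_def using b12 b
      by (simp add: lcomp_def padd_def pcompose_0' pcompose_0)
    ultimately have "a b1 = 0" using indep_basis by blast
    thus False unfolding a_def by simp
  qed
  show "b2 \<noteq> (0, 0)"
  proof
    assume b: "b2 = (0, 0)"
    define a where "a = (\<lambda>h. if h = b2 then [:0, 1::'a:] else 0)"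
    have "\<forall>h\<in>{b1, b2}. a h \<in> linpolys q" unfolding a_def using lin_X by auto
    moreover have "lcomb {b1, b2} a = (0, 0)" unfolding lcomb2 a_def using b12 b
      by (simp add: lcomp_def padd_def pcompose_0' pcompose_0)
    ultimately have "a b2 = 0" using indep_basis by blast
    thus False unfolding a_def by simp
  qed
qed

lemma P1: "fst b1 \<noteq> 0 \<and> (snd b1 = 0 \<or> qdeg q (snd b1) + (k - 1) < qdeg q (fst b1))"
  using lpos1[OF lins(1,2), of k] b_nz(1) lp1 by simp

lemma P2: "snd b2 \<noteq> 0 \<and> (fst b2 = 0 \<or> qdeg q (fst b2) \<le> qdeg q (snd b2) + (k - 1))"
  using lpos2[OF lins(3,4), of k] b_nz(2) lp2 by simp

lemma W1: "wqdeg q k b1 = int (qdeg q (fst b1))"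
  using wqdeg1[of "fst b1" "snd b1" k] P1 k1 by simp

lemma W2: "wqdeg q k b2 = int (qdeg q (snd b2)) + int k - 1"
  using wqdeg2[OF k1, of "snd b2" "fst b2"] P2 by simp

lemma rank_conv: "rank_dist q n (codeword g mp) r = Max (rkset (\<lambda>i. poly mp (g i) - r i) n)"
  unfolding rank_dist_rkset codeword_def ..

lemma F1: assumes mp: "mp \<in> alg_candidates q k b1 b2 j"
  shows "mp \<in> gabidulin_msgs q k \<and> rank_dist q n (codeword g mp) r \<le> qdeg q (snd b2) + j"
proof -
  obtain \<beta> \<gamma> where c: "mp \<in> linpolys q" "\<beta> \<in> linpolys q"
     "\<beta> = 0 \<or> int (qdeg q \<beta>) \<le> wqdeg q k b2 - wqdeg q k b1 + int j"
     "\<gamma> \<in> linpolys q" "\<gamma> \<noteq> 0" "qdeg q \<gamma> = j"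
     "fst (padd (lcomp \<beta> b1) (lcomp \<gamma> b2)) = - (snd (padd (lcomp \<beta> b1) (lcomp \<gamma> b2)) \<circ>\<^sub>p mp)"
    using mp unfolding alg_candidates_def Let_def by blast
  define f where "f = padd (lcomp \<beta> b1) (lcomp \<gamma> b2)"
  have fst_f: "fst f = \<beta> \<circ>\<^sub>p fst b1 + \<gamma> \<circ>\<^sub>p fst b2" and snd_f: "snd f = \<beta> \<circ>\<^sub>p snd b1 + \<gamma> \<circ>\<^sub>p snd b2"
    unfolding f_def lcomp_def padd_def by simp_all
  have hb: "\<beta> = 0 \<or> qdeg q \<beta> + qdeg q (fst b1) \<le> qdeg q (snd b2) + (k - 1) + qdeg q \<gamma>"
    using c(3) W1 W2 k1 c(6) by auto
  note d = D1[OF lins(1,2,3,4) c(2) c(4) conjunct1[OF P2] c(5) conjunct2[OF P1] conjunct2[OF P2] hb]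
  have sf: "snd f \<noteq> 0" "qdeg q (snd f) = qdeg q (snd b2) + j" using d(1,2) c(6) unfolding snd_f by auto
  have ff: "fst f = 0 \<or> qdeg q (fst f) \<le> qdeg q (snd b2) + j + (k - 1)" using d(3) c(6) unfolding fst_f by auto
  have gf: "good g r n f" unfolding f_def by (intro good_padd good_lcomp good_b c(2) c(4))
  have sfl: "snd f \<in> linpolys q" using gf unfolding good_def by blast
  have eq: "fst f = - (snd f \<circ>\<^sub>p mp)" using c(7) unfolding f_def .
  have "mp = 0 \<or> qdeg q mp < k"
  proof (cases "mp = 0")
    case False
    have nz: "snd f \<circ>\<^sub>p mp \<noteq> 0" and qd: "qdeg q (snd f \<circ>\<^sub>p mp) = qdeg q (snd f) + qdeg q mp"
      using lin_pcomp_nz[OF sfl sf(1) c(1) False] by auto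
    have "fst f \<noteq> 0" using eq nz by simp
    hence "qdeg q (fst f) \<le> qdeg q (snd b2) + j + (k - 1)" using ff by simp
    moreover have "qdeg q (fst f) = qdeg q (snd f) + qdeg q mp" using eq qd by (simp add: qdeg_uminus)
    ultimately show ?thesis using sf(2) k1 by arith
  qed simp
  hence "mp \<in> gabidulin_msgs q k" using c(1) unfolding gabidulin_msgs_def by simp
  moreover have "rank_dist q n (codeword g mp) r \<le> qdeg q (snd f)"
    unfolding rank_conv
    by (rule rank_upper[OF sfl sf(1)]) (rule good_vanish[OF ind gf eq])
  ultimately show ?thesis using sf(2) by simp
qed

lemma F2: assumes mp: "mp \<in> gabidulin_msgs q k"
  shows "qdeg q (snd b2) \<le> rank_dist q n (codeword g mp) r \<and>
    mp \<in> alg_candidates q k b1 b2 (rank_dist q n (codeword g mp) r - qdeg q (snd b2))"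
proof -
  have mpl: "mp \<in> linpolys q" and mpd: "mp = 0 \<or> qdeg q mp < k"
    using mp unfolding gabidulin_msgs_def by auto
  define t where "t = rank_dist q n (codeword g mp) r"
  obtain E where E: "E \<in> linpolys q" "E \<noteq> 0" "qdeg q E = t" "\<forall>l<n. poly E (poly mp (g l) - r l) = 0"
    using rank_ann[of "\<lambda>i. poly mp (g i) - r i" n] unfolding t_def rank_conv by blast
  have "(- (E \<circ>\<^sub>p mp), E) \<in> interp_module q n g r" using module_member[OF ind E(1) mpl] E(4) by blast
  then obtain a where a: "\<forall>h\<in>{b1, b2}. a h \<in> linpolys q" "(- (E \<circ>\<^sub>p mp), E) = lcomb {b1, b2} a"
    using basis unfolding is_basis_def by blast
  define \<beta> where "\<beta> = a b1"
  define \<gamma> where "\<gamma> = a b2"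
  have bl: "\<beta> \<in> linpolys q" "\<gamma> \<in> linpolys q" using a(1) unfolding \<beta>_def \<gamma>_def by auto
  have "lcomb {b1, b2} a = (\<beta> \<circ>\<^sub>p fst b1 + \<gamma> \<circ>\<^sub>p fst b2, \<beta> \<circ>\<^sub>p snd b1 + \<gamma> \<circ>\<^sub>p snd b2)"
    unfolding lcomb2 \<beta>_def \<gamma>_def lcomp_def padd_def by simp
  with a(2) have "(- (E \<circ>\<^sub>p mp), E) = (\<beta> \<circ>\<^sub>p fst b1 + \<gamma> \<circ>\<^sub>p fst b2, \<beta> \<circ>\<^sub>p snd b1 + \<gamma> \<circ>\<^sub>p snd b2)"
    by (rule trans)
  hence pe: "- (E \<circ>\<^sub>p mp) = \<beta> \<circ>\<^sub>p fst b1 + \<gamma> \<circ>\<^sub>p fst b2 \<and> E = \<beta> \<circ>\<^sub>p snd b1 + \<gamma> \<circ>\<^sub>p snd b2"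
    by (rule iffD1[OF prod.inject])
  have eqs: "\<beta> \<circ>\<^sub>p fst b1 + \<gamma> \<circ>\<^sub>p fst b2 = - (E \<circ>\<^sub>p mp)" "\<beta> \<circ>\<^sub>p snd b1 + \<gamma> \<circ>\<^sub>p snd b2 = E"
    by (rule sym[OF conjunct1[OF pe]], rule sym[OF conjunct2[OF pe]])
  have hF: "\<beta> \<circ>\<^sub>p fst b1 + \<gamma> \<circ>\<^sub>p fst b2 = 0 \<or>
     qdeg q (\<beta> \<circ>\<^sub>p fst b1 + \<gamma> \<circ>\<^sub>p fst b2) \<le> qdeg q (\<beta> \<circ>\<^sub>p snd b1 + \<gamma> \<circ>\<^sub>p snd b2) + (k - 1)"
  proof (cases "mp = 0")
    case True thus ?thesis unfolding eqs using lin_pcomp_0[OF E(1)] by simp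
  next
    case False
    hence "qdeg q (E \<circ>\<^sub>p mp) = qdeg q E + qdeg q mp" using lin_pcomp_nz(2)[OF E(1,2) mpl] by simp
    moreover have "qdeg q mp \<le> k - 1" using mpd False by simp
    ultimately have "qdeg q (- (E \<circ>\<^sub>p mp)) \<le> qdeg q E + (k - 1)" by (simp add: qdeg_uminus)
    thus ?thesis unfolding eqs by (rule disjI2)
  qed
  have hE: "\<beta> \<circ>\<^sub>p snd b1 + \<gamma> \<circ>\<^sub>p snd b2 \<noteq> 0" unfolding eqs by (rule E(2))
  note d2 = D2[OF lins(1,2,3,4) bl conjunct1[OF P1] conjunct1[OF P2] conjunct2[OF P1] conjunct2[OF P2] hE hF]
  note d1 = D1[OF lins(1,2,3,4) bl conjunct1[OF P2] d2(1) conjunct2[OF P1] conjunct2[OF P2] d2(2)]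
  have tB: "t = qdeg q (snd b2) + qdeg q \<gamma>" using d1(2) unfolding eqs E(3) .
  define c where "c = inverse (lead_coeff \<gamma>)"
  have cnz: "c \<noteq> 0" using d2(1) unfolding c_def by simp
  define \<beta>' where "\<beta>' = smult c \<beta>"
  define \<gamma>' where "\<gamma>' = smult c \<gamma>"
  have f1: "\<beta>' \<in> linpolys q" "\<gamma>' \<in> linpolys q" unfolding \<beta>'_def \<gamma>'_def using bl by (auto intro: lin_smult)
  have f2: "\<gamma>' \<noteq> 0" unfolding \<gamma>'_def using cnz d2(1) by simp
  have f3: "lead_coeff \<gamma>' = 1" unfolding \<gamma>'_def c_def using d2(1) by simp
  have f4: "qdeg q \<gamma>' = qdeg q \<gamma>" unfolding \<gamma>'_def using cnz by (rule qdeg_smult)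
  have f5: "\<beta>' = 0 \<or> int (qdeg q \<beta>') \<le> wqdeg q k b2 - wqdeg q k b1 + int (qdeg q \<gamma>)"
  proof (cases "\<beta> = 0")
    case True thus ?thesis unfolding \<beta>'_def by simp
  next
    case False
    hence "qdeg q \<beta> + qdeg q (fst b1) \<le> qdeg q (snd b2) + (k - 1) + qdeg q \<gamma>" using d2(2) by simp
    hence "int (qdeg q \<beta>) \<le> int (qdeg q (snd b2)) + int k - 1 - int (qdeg q (fst b1)) + int (qdeg q \<gamma>)"
      using k1 by linarith
    thus ?thesis unfolding \<beta>'_def qdeg_smult[OF cnz] W1 W2 by simp
  qed
  have "padd (lcomp \<beta>' b1) (lcomp \<gamma>' b2) =
      (smult c (\<beta> \<circ>\<^sub>p fst b1 + \<gamma> \<circ>\<^sub>p fst b2), smult c (\<beta> \<circ>\<^sub>p snd b1 + \<gamma> \<circ>\<^sub>p snd b2))"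
    unfolding \<beta>'_def \<gamma>'_def lcomp_def padd_def by (simp add: pcompose_smult smult_add_right)
  also have "\<dots> = (smult c (- (E \<circ>\<^sub>p mp)), smult c E)" unfolding eqs ..
  finally have "padd (lcomp \<beta>' b1) (lcomp \<gamma>' b2) = (smult c (- (E \<circ>\<^sub>p mp)), smult c E)" .
  hence f6: "fst (padd (lcomp \<beta>' b1) (lcomp \<gamma>' b2)) = - (snd (padd (lcomp \<beta>' b1) (lcomp \<gamma>' b2)) \<circ>\<^sub>p mp)"
    by (simp add: pcompose_smult)
  have "mp \<in> alg_candidates q k b1 b2 (qdeg q \<gamma>)"
    unfolding alg_candidates_def Let_def mem_Collect_eq
    using mpl f1 f2 f3 f4 f5 f6 by blast
  thus ?thesis using tB unfolding t_def by simp
qed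

lemma main_result:
  shows "(\<exists>j. alg_candidates q k b1 b2 j \<noteq> {}) \<and>
         algorithm1_output q k b1 b2 =
           {mp \<in> gabidulin_msgs q k.
              \<forall>mp' \<in> gabidulin_msgs q k.
                rank_dist q n (codeword g mp) r \<le> rank_dist q n (codeword g mp') r}"
proof -
  let ?R = "\<lambda>mp. rank_dist q n (codeword g mp) r"
  let ?Gab = "gabidulin_msgs q k"
  let ?C = "alg_candidates q k b1 b2"
  let ?B = "qdeg q (snd b2)"
  have z: "(0 :: 'a poly) \<in> ?Gab" unfolding gabidulin_msgs_def by simp
  define ts where "ts = (LEAST t. \<exists>mp\<in>?Gab. ?R mp = t)"
  have ex: "\<exists>t. \<exists>mp\<in>?Gab. ?R mp = t" using z by blast
  obtain ms where ms: "ms \<in> ?Gab" "?R ms = ts" using LeastI_ex[OF ex] unfolding ts_def by blast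
  have low: "ts \<le> ?R mp" if "mp \<in> ?Gab" for mp unfolding ts_def using that by (intro Least_le) blast
  define js where "js = ts - ?B"
  have F2s: "?B \<le> ts" "ms \<in> ?C js" using F2[OF ms(1)] ms(2) unfolding js_def by auto
  have exj: "\<exists>j. ?C j \<noteq> {}" using F2s(2) by blast
  define j0 where "j0 = (LEAST j. ?C j \<noteq> {})"
  have j0le: "j0 \<le> js" unfolding j0_def using F2s(2) by (intro Least_le) blast
  have Cj0: "?C j0 \<noteq> {}" unfolding j0_def using LeastI_ex[OF exj] .
  then obtain m0 where m0: "m0 \<in> ?C j0" by blast
  have "m0 \<in> ?Gab" "?R m0 \<le> ?B + j0" using F1[OF m0] by auto
  hence "ts \<le> ?B + j0" using low by (meson order_trans)
  hence "js \<le> j0" unfolding js_def by simp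
  hence j0js: "j0 = js" using j0le by simp
  have out: "algorithm1_output q k b1 b2 = ?C js" unfolding algorithm1_output_def j0_def[symmetric] j0js ..
  have "?C js = {mp \<in> ?Gab. \<forall>mp' \<in> ?Gab. ?R mp \<le> ?R mp'}"
  proof (intro equalityI subsetI)
    fix mp assume mp: "mp \<in> ?C js"
    have "mp \<in> ?Gab" "?R mp \<le> ?B + js" using F1[OF mp] by auto
    moreover have "?B + js = ts" using F2s(1) unfolding js_def by simp
    ultimately show "mp \<in> {mp \<in> ?Gab. \<forall>mp' \<in> ?Gab. ?R mp \<le> ?R mp'}" using low by (auto intro: order_trans)
  next
    fix mp assume mp: "mp \<in> {mp \<in> ?Gab. \<forall>mp' \<in> ?Gab. ?R mp \<le> ?R mp'}"
    hence "mp \<in> ?Gab" "?R mp \<le> ts" using ms by auto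
    hence R: "?R mp = ts" using low by (meson antisym)
    show "mp \<in> ?C js" using F2[OF \<open>mp \<in> ?Gab\<close>] unfolding R js_def by simp
  qed
  thus ?thesis using exj out by simp
qed

end
end

theorem theorem23_aux:
  fixes q m k n :: nat and g r :: "nat \<Rightarrow> 'a::{field,finite}"
    and b1 b2 :: "'a poly \<times> 'a poly"
  assumes "\<exists>p e. prime p \<and> 0 < e \<and> q = p ^ e"
    and "1 \<le> m" and "CARD('a) = q ^ m"
    and "1 \<le> k" and "k \<le> n"
    and "Fq_lin_indep q g {..<n}"
    and "minimal_basis q k (interp_module q n g r) {b1, b2}"
    and "lpos q k b1 = 1" and "lpos q k b2 = 2"
  shows "(\<exists>j. alg_candidates q k b1 b2 j \<noteq> {}) \<and>
         algorithm1_output q k b1 b2 =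
           {mp \<in> gabidulin_msgs q k.
              \<forall>mp' \<in> gabidulin_msgs q k.
                rank_dist q n (codeword g mp) r \<le> rank_dist q n (codeword g mp') r}"
proof -
  obtain p e where pe: "prime p" "0 < e" "q = p ^ e" using assms(1) by blast
  have cpos: "0 < CHAR('a)" by (rule finite_imp_CHAR_pos) simp
  have cprime: "prime CHAR('a)" using cpos by (rule prime_CHAR_semidom)
  have "CHAR('a) dvd CARD('a)" using of_nat_card_eq_0[where 'a='a] of_nat_eq_0_iff_char_dvd by blast
  hence "CHAR('a) dvd p ^ (e * m)" using assms(3) pe(3) by (simp add: power_mult)
  hence "CHAR('a) dvd p" using cprime prime_dvd_power by blast
  hence "CHAR('a) = p" using cprime pe(1) by (metis primes_dvd_imp_eq)
  hence qc: "q = CHAR('a) ^ e" using pe(3) by simp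
  interpret G: gab q e m "TYPE('a)"
    by unfold_locales (use qc pe(2) assms(2,3) in auto)
  show ?thesis by (rule G.main_result) (use assms in auto)
qed


theorem theorem23:
  fixes q m k n :: nat and g r :: "nat \<Rightarrow> 'a::{field,finite}"
    and b1 b2 :: "'a poly \<times> 'a poly"
  assumes "\<exists>p e. prime p \<and> 0 < e \<and> q = p ^ e"
    and "1 \<le> m" and "CARD('a) = q ^ m"
    and "1 \<le> k" and "k \<le> n"
    and "Fq_lin_indep q g {..<n}"
    and "minimal_basis q k (interp_module q n g r) {b1, b2}"
    and "lpos q k b1 = 1" and "lpos q k b2 = 2"
  shows "(\<exists>j. alg_candidates q k b1 b2 j \<noteq> {}) \<and>
         algorithm1_output q k b1 b2 =
           {mp \<in> gabidulin_msgs q k.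
              \<forall>mp' \<in> gabidulin_msgs q k.
                rank_dist q n (codeword g mp) r \<le> rank_dist q n (codeword g mp') r}"
    using assms by (rule theorem23_aux)

end
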